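(* Let $N,k,d$ be integers with $2\leq N\leq k$ and $d\geq 1$, and let $j$ be any non-negative integer. Set $m=1+(k-N)d$ and define the rational number \[ w(\sigma_{j}(\mathcal{O}_{h^{N-2-j}})\mathcal{O}_{h^{-m}}|(\mathcal{O}_{h})^{m})_{0,2|m}:=\frac{1}{(2 \pi \sqrt{-1})^{d+1}} \oint_{C_{0}} \frac{dz_{0}}{(z_{0})^{N}} \oint_{C_{1}} \frac{dz_{1}}{(z_{1})^{N}} \cdots \oint_{C_{d}} \frac{dz_{d}}{(z_{d})^{N}}\,(z_{0})^{N-2-j} (z_{1} - z_{0})^{j} \Bigl(\prod_{l=1}^{d} e^{k}(z_{l-1},z_{l}) \Bigr)\Bigl(\prod_{l=1}^{d-1} \frac{1}{kz_{l} (2z_{l} - z_{l-1} - z_{l+1})}\Bigr)\frac{1}{(z_{d})^{m}}\left( d + \frac{z_0}{z_1 - z_0} \right)^{m}, \] where $e^{k}(z,w)=\prod_{i=0}^{k}(iz+(k-i)w)$. Then \[ \frac{1}{k}\,w(\sigma_{j}(\mathcal{O}_{h^{N-2-j}})\mathcal{O}_{h^{-m}}|(\mathcal{O}_{h})^{m})_{0,2|m} =\frac{1}{j!}\frac{\partial^{j}}{\partial \varepsilon^{j}}\left.\left(\frac{\prod_{r=1}^{kd}(r+k\varepsilon)}{\prod_{r=1}^{d}(r+\varepsilon)^N}\right) \right|_{\varepsilon=0}. \]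
   Context: In the residue integral, the operation $\frac{1}{2 \pi \sqrt{-1}} \oint_{C_{i}} dz_{i}$ means taking residues at $z_{i} = 0$ for $i = 0$ and $i=d$, and taking (the sum of) residues at $z_{i} = 0$ and $z_i=\frac{z_{i-1} + z_{i+1}}{2}$ for $i = 1 , \ldots , d-1$. The residue integrals are taken in ascending order with respect to the subscript of the $z_{i}$'s (i.e. from left to right as written: first $z_0$, then $z_1$, ..., finally $z_d$). An empty product (e.g. $\prod_{l=1}^{d-1}$ when $d=1$) equals $1$. The symbol $w(\sigma_{j}(\mathcal{O}_{h^{N-2-j}})\mathcal{O}_{h^{-m}}|(\mathcal{O}_{h})^{m})_{0,2|m}$ is just a name for the number defined by this residue integral. *)

theory Defs
  imports "HOL-Complex_Analysis.Complex_Analysis"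
begin

definition ek :: "nat \<Rightarrow> complex \<Rightarrow> complex \<Rightarrow> complex" where
  "ek k z w = (\<Prod>i=0..k. of_nat i * z + of_nat (k - i) * w)"

definition integrand :: "nat \<Rightarrow> nat \<Rightarrow> nat \<Rightarrow> nat \<Rightarrow> (nat \<Rightarrow> complex) \<Rightarrow> complex" where
  "integrand N k d j z =
     (let m = 1 + (k - N) * d in
      (\<Prod>l=0..d. 1 / (z l) ^ N)
      * (z 0) powi (int N - 2 - int j) * (z 1 - z 0) ^ j
      * (\<Prod>l=1..d. ek k (z (l - 1)) (z l))
      * (\<Prod>l=1..d-1. 1 / (of_nat k * z l * (2 * z l - z (l - 1) - z (l + 1))))
      * (1 / (z d) ^ m) * (of_nat d + z 0 / (z 1 - z 0)) ^ m)"

text \<open>Possible values c such that, after the residue in z_i has been taken,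
  z_i has been replaced by c * z_(i+1) (c = 0 for the residue at 0,
  c = 1/(2 - a) for the residue at z_i = (z_(i-1) + z_(i+1))/2 when z_(i-1) = a * z_i).\<close>
fun coef_set :: "nat \<Rightarrow> complex set" where
  "coef_set 0 = {0}"
| "coef_set (Suc i) = insert 0 ((\<lambda>a. 1 / (2 - a)) ` coef_set i)"

definition res_points :: "nat \<Rightarrow> nat \<Rightarrow> (nat \<Rightarrow> complex) \<Rightarrow> complex set" where
  "res_points d i z =
     (if i = 0 \<or> i \<ge> d then {0}
      else insert 0 ((\<lambda>a. z (i + 1) / (2 - a)) ` coef_set (i - 1)))"

definition res_step :: "nat \<Rightarrow> nat \<Rightarrow> ((nat \<Rightarrow> complex) \<Rightarrow> complex) \<Rightarrow> (nat \<Rightarrow> complex) \<Rightarrow> complex" where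
  "res_step d i F z = (\<Sum>p\<in>res_points d i z. residue (\<lambda>w. F (z(i := w))) p)"

fun iter_res :: "nat \<Rightarrow> nat \<Rightarrow> ((nat \<Rightarrow> complex) \<Rightarrow> complex) \<Rightarrow> (nat \<Rightarrow> complex) \<Rightarrow> complex" where
  "iter_res d 0 F = res_step d 0 F"
| "iter_res d (Suc i) F = res_step d (Suc i) (iter_res d i F)"

definition w_num :: "nat \<Rightarrow> nat \<Rightarrow> nat \<Rightarrow> nat \<Rightarrow> complex" where
  "w_num N k d j = iter_res d d (integrand N k d j) (\<lambda>_. 0)"

end

theory Submission
  imports Defs
begin


lemma residue_eqI:
  assumes "e > 0" "\<And>r. 0 < r \<Longrightarrow> r < e \<Longrightarrow> (f has_contour_integral 2*pi*\<i>*X) (circlepath p r)"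
  shows "residue f p = X"
proof -
  let ?P = "\<lambda>int. \<exists>e>0. \<forall>\<epsilon>>0. \<epsilon><e \<longrightarrow> (f has_contour_integral 2*pi*\<i>*int) (circlepath p \<epsilon>)"
  have PX: "?P X" using assms by blast
  have uniq: "int = X" if "?P int" for int
  proof -
    from that obtain e' where e': "e' > 0" "\<forall>\<epsilon>>0. \<epsilon><e' \<longrightarrow> (f has_contour_integral 2*pi*\<i>*int) (circlepath p \<epsilon>)" by blast
    define r where "r = min e e' / 2"
    have r: "r > 0" "r < e" "r < e'" using assms(1) e'(1) by (auto simp: r_def)
    have "2*pi*\<i>*int = 2*pi*\<i>*X"
      using has_contour_integral_unique[OF e'(2)[rule_format, OF r(1) r(3)] assms(2)[OF r(1) r(2)]] .
    thus ?thesis by simp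
  qed
  show ?thesis unfolding residue_def
    using someI[of ?P X, OF PX] uniq by blast
qed


lemma contour_integral_circlepath_param_cont:
  fixes K :: "complex \<Rightarrow> complex \<Rightarrow> complex"
  assumes "continuous_on (sphere 0 \<delta> \<times> S) (\<lambda>(e,w). K e w)" "\<delta> \<ge> 0"
  shows "continuous_on S (\<lambda>w. contour_integral (circlepath 0 \<delta>) (\<lambda>e. K e w))"
proof -
  have eq: "contour_integral (circlepath 0 \<delta>) (\<lambda>e. K e w) =
     integral (cbox 0 1) (\<lambda>t. K (circlepath 0 \<delta> t) w * (2 * pi * \<i> * \<delta> * exp (2 * of_real pi * \<i> * t)))" for w
    unfolding contour_integral_integral vector_derivative_circlepath by simp
  have img: "norm (circlepath 0 \<delta> t) = \<delta>" for t
    using assms(2) by (simp add: circlepath norm_mult)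
  have "continuous_on (S \<times> cbox 0 1) (\<lambda>(w, t). K (circlepath 0 \<delta> t) w * (2 * pi * \<i> * \<delta> * exp (2 * of_real pi * \<i> * t)))"
  proof -
    have c1: "continuous_on (S \<times> cbox 0 1) (\<lambda>x. (circlepath 0 \<delta> (snd x), fst x))"
      unfolding circlepath by (intro continuous_intros)
    have "continuous_on (S \<times> cbox 0 1) ((\<lambda>(e,w). K e w) \<circ> (\<lambda>x. (circlepath 0 \<delta> (snd x), fst x)))"
      by (rule continuous_on_compose[OF c1 continuous_on_subset[OF assms(1)]]) (auto simp: img dist_norm)
    then show ?thesis
      by (auto simp: o_def case_prod_beta intro!: continuous_intros)
  qed
  from integral_continuous_on_param[OF this] show ?thesis by (simp add: eq)
qed

lemma residue_swap:
  fixes K :: "complex \<Rightarrow> complex \<Rightarrow> complex" and R V :: "complex \<Rightarrow> complex"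
  assumes "\<rho> > 0"
    and R_eq: "\<And>w. w \<in> ball p \<rho> - {p} \<Longrightarrow> R w = residue (\<lambda>e. K e w) 0"
    and main: "\<And>r. 0 < r \<Longrightarrow> r < \<rho> \<Longrightarrow> \<exists>\<delta> \<delta>'. 0 < \<delta> \<and> \<delta> < \<delta>' \<and>
        (\<forall>w \<in> sphere p r. (\<lambda>e. K e w) holomorphic_on ball 0 \<delta>' - {0}) \<and>
        continuous_on (sphere 0 \<delta> \<times> sphere p r) (\<lambda>(e,w). K e w) \<and>
        (\<forall>e \<in> sphere 0 \<delta>. ((\<lambda>w. K e w) has_contour_integral 2*pi*\<i>*V e) (circlepath p r)) \<and>
        (V has_contour_integral 2*pi*\<i>*X) (circlepath 0 \<delta>)"
  shows "residue R p = X"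
proof (rule residue_eqI[OF \<open>\<rho>>0\<close>])
  fix r assume r: "0<r" "r<\<rho>"
  from main[OF r] obtain \<delta> \<delta>' where d: "0 < \<delta>" "\<delta> < \<delta>'"
    and hol: "\<forall>w \<in> sphere p r. (\<lambda>e. K e w) holomorphic_on ball 0 \<delta>' - {0}"
    and cont: "continuous_on (sphere 0 \<delta> \<times> sphere p r) (\<lambda>(e,w). K e w)"
    and inner: "\<forall>e \<in> sphere 0 \<delta>. ((\<lambda>w. K e w) has_contour_integral 2*pi*\<i>*V e) (circlepath p r)"
    and outer: "(V has_contour_integral 2*pi*\<i>*X) (circlepath 0 \<delta>)"
    by blast
  have Rw: "R w = contour_integral (circlepath 0 \<delta>) (\<lambda>e. K e w) / (2*pi*\<i>)" if w: "w \<in> sphere p r" for w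
  proof -
    have "w \<in> ball p \<rho> - {p}" using w r by (auto simp: dist_commute)
    hence "R w = residue (\<lambda>e. K e w) 0" by (rule R_eq)
    moreover have "((\<lambda>e. K e w) has_contour_integral 2*pi*\<i>*residue (\<lambda>e. K e w) 0) (circlepath 0 \<delta>)"
      by (rule base_residue[of "ball 0 \<delta>'"]) (use d hol w in auto)
    ultimately show ?thesis
      using contour_integral_unique by fastforce
  qed
  have contR: "continuous_on (sphere p r) (\<lambda>w. contour_integral (circlepath 0 \<delta>) (\<lambda>e. K e w) / (2*pi*\<i>))"
    using contour_integral_circlepath_param_cont[OF cont] d by (intro continuous_intros) auto
  have int0: "(\<lambda>w. contour_integral (circlepath 0 \<delta>) (\<lambda>e. K e w)) contour_integrable_on circlepath p r"
    using contour_integral_circlepath_param_cont[OF cont] d r by (intro contour_integrable_continuous_circlepath) auto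
  have int1: "(\<lambda>w. contour_integral (circlepath 0 \<delta>) (\<lambda>e. K e w) / (2*pi*\<i>)) contour_integrable_on circlepath p r"
    using contR r by (intro contour_integrable_continuous_circlepath) auto
  have "contour_integral (circlepath p r) (\<lambda>w. contour_integral (circlepath 0 \<delta>) (\<lambda>e. K e w))
      = contour_integral (circlepath 0 \<delta>) (\<lambda>e. contour_integral (circlepath p r) (\<lambda>w. K e w))"
  proof (rule contour_integral_swap)
    show "continuous_on (path_image (circlepath p r) \<times> path_image (circlepath 0 \<delta>)) (\<lambda>(y1, y2). K y2 y1)"
    proof -
      have "continuous_on (sphere p r \<times> sphere 0 \<delta>) ((\<lambda>(e,w). K e w) \<circ> (\<lambda>x. (snd x, fst x)))"
        by (rule continuous_on_compose[OF _ continuous_on_subset[OF cont]]) (auto intro!: continuous_intros)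
      then show ?thesis using r d by (simp add: o_def case_prod_beta)
    qed
  qed (auto intro!: continuous_intros simp: vector_derivative_circlepath)
  also have "\<dots> = contour_integral (circlepath 0 \<delta>) (\<lambda>e. 2*pi*\<i>*V e)"
    by (rule contour_integral_cong) (use inner d in \<open>auto intro: contour_integral_unique\<close>)
  also have "\<dots> = 2*pi*\<i> * (2*pi*\<i>*X)"
    using has_contour_integral_lmul[OF outer, of "2*pi*\<i>"] by (simp add: contour_integral_unique)
  finally have eq: "contour_integral (circlepath p r) (\<lambda>w. contour_integral (circlepath 0 \<delta>) (\<lambda>e. K e w)) = 2*pi*\<i> * (2*pi*\<i>*X)" .
  have "((\<lambda>w. contour_integral (circlepath 0 \<delta>) (\<lambda>e. K e w) / (2*pi*\<i>)) has_contour_integral 2*pi*\<i>*X) (circlepath p r)"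
  proof -
    have "contour_integral (circlepath p r) (\<lambda>w. contour_integral (circlepath 0 \<delta>) (\<lambda>e. K e w) / (2*pi*\<i>))
       = contour_integral (circlepath p r) (\<lambda>w. contour_integral (circlepath 0 \<delta>) (\<lambda>e. K e w)) / (2*pi*\<i>)"
      by (rule contour_integral_div[OF int0])
    also have "\<dots> = 2*pi*\<i>*X" using eq by simp
    finally show ?thesis using has_contour_integral_integral[OF int1] by simp
  qed
  then show "(R has_contour_integral 2*pi*\<i>*X) (circlepath p r)"
    by (rule has_contour_integral_eq) (use Rw r in auto)
qed


lemma residue_mobius:
  fixes f :: "complex \<Rightarrow> complex" and c :: complex
  assumes holf: "f holomorphic_on ball 0 R - {0}" and "R > 0" and "c \<noteq> 0"
  shows "residue f 0 = residue (\<lambda>e. f (c*e/(1+e)) * (c/(1+e)^2)) 0"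
proof -
  define \<phi> where "\<phi> = (\<lambda>e::complex. c*e/(1+e))"
  define g where "g = (\<lambda>e. f (\<phi> e) * (c/(1+e)^2))"
  define \<delta> where "\<delta> = min (1/8) (R/(4*(norm c+1)))"
  have pos: "R/(4*(norm c+1)) > 0" using assms by (intro divide_pos_pos) (auto intro: add_nonneg_pos)
  have \<delta>: "\<delta> > 0" "\<delta> \<le> 1/8" "\<delta> \<le> R/(4*(norm c+1))" using pos unfolding \<delta>_def by (auto simp del: divide_const_simps)
  have one_plus: "norm (1+e) \<ge> 3/4" if "norm e < 1/4" for e :: complex
    using norm_triangle_ineq2[of 1 "-e"] that by (simp add: algebra_simps)
  have phi_small: "norm (\<phi> e) < R" if "norm e < 2*\<delta>" for e
  proof -
    have ne: "norm e < 1/4" using that \<delta> by auto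
    have "norm (\<phi> e) = norm c * norm e / norm (1+e)" by (simp add: \<phi>_def norm_mult norm_divide)
    also have "\<dots> \<le> norm c * norm e / (3/4)"
      using one_plus[OF ne] by (intro divide_left_mono mult_nonneg_nonneg) auto
    also have "\<dots> \<le> norm c * (2*\<delta>) / (3/4)"
      using that by (intro divide_right_mono mult_left_mono) auto
    also have "\<dots> < R"
    proof -
      have "norm c * (2*\<delta>) \<le> norm c * (2*(R/(4*(norm c+1))))"
        using \<delta> by (intro mult_left_mono) auto
      also have "\<dots> = R/2 * (norm c/(norm c + 1))"
        by (simp add: divide_simps)
      also have "\<dots> < R/2 * 1"
      proof -
        have h: "norm c + 1 > 0" using norm_ge_zero[of c] by linarith
        have "norm c/(norm c + 1) < 1" using h by (simp add: divide_simps)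
        thus ?thesis using \<open>R>0\<close> by (intro mult_strict_left_mono) auto
      qed
      finally show ?thesis using \<open>R>0\<close> by (simp add: field_simps)
    qed
    finally show ?thesis .
  qed
  have phi_nz: "\<phi> e \<noteq> 0" if "e \<noteq> 0" "norm e < 1/4" for e
    using that assms one_plus[of e] by (auto simp: \<phi>_def)
  have den_nz: "1 + e \<noteq> 0" if "norm e < 1/4" for e :: complex
    using one_plus[OF that] by auto
  have den_nz': "1 + e \<noteq> 0" if "e \<in> ball 0 (1/4)" for e :: complex
    using den_nz[of e] that by simp
  have hol_phi: "\<phi> holomorphic_on ball 0 (1/4)"
    unfolding \<phi>_def by (intro holomorphic_intros) (use den_nz' in blast)
  have ana_phi: "\<phi> analytic_on ball 0 (1/4)"
    using hol_phi by (simp add: analytic_on_open)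
  have deriv_phi: "deriv \<phi> e = c/(1+e)^2" if "norm e < 1/4" for e
  proof -
    have "(\<phi> has_field_derivative c/(1+e)^2) (at e)"
      unfolding \<phi>_def using den_nz[OF that]
      by (auto intro!: derivative_eq_intros simp: field_simps power2_eq_square)
    thus ?thesis by (rule DERIV_imp_deriv)
  qed
  have hol_g: "g holomorphic_on ball 0 (2*\<delta>) - {0}"
  proof -
    have "(f \<circ> \<phi>) holomorphic_on ball 0 (2*\<delta>) - {0}"
    proof (rule holomorphic_on_compose_gen)
      show "\<phi> holomorphic_on ball 0 (2*\<delta>) - {0}"
        by (rule holomorphic_on_subset[OF hol_phi]) (use \<delta> in auto)
      show "f holomorphic_on ball 0 R - {0}" by (rule holf)
      show "\<phi> ` (ball 0 (2 * \<delta>) - {0}) \<subseteq> ball 0 R - {0}"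
        using phi_small phi_nz \<delta> by auto
    qed
    then show ?thesis unfolding g_def o_def
      by (intro holomorphic_intros) (use \<delta> den_nz in auto)
  qed
  define \<gamma> where "\<gamma> = circlepath 0 \<delta>"
  have pig: "path_image \<gamma> = sphere 0 \<delta>" using \<delta> by (simp add: \<gamma>_def)
  have g_int: "(g has_contour_integral 2*pi*\<i>*residue g 0) \<gamma>"
    unfolding \<gamma>_def by (rule base_residue[of "ball 0 (2*\<delta>)"]) (use \<delta> hol_g in auto)
  have comp: "contour_integral (\<phi> \<circ> \<gamma>) h = contour_integral \<gamma> (\<lambda>w. deriv \<phi> w * h (\<phi> w))" for h
    by (rule contour_integral_comp_analyticW[OF ana_phi]) (use \<delta> pig in \<open>auto simp: \<gamma>_def\<close>)
  have vp: "valid_path (\<phi> \<circ> \<gamma>)"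
    by (rule valid_path_compose_analytic[OF _ ana_phi]) (use \<delta> pig in \<open>auto simp: \<gamma>_def\<close>)
  have loop: "pathfinish (\<phi> \<circ> \<gamma>) = pathstart (\<phi> \<circ> \<gamma>)"
    using pathfinish_circlepath[of 0 \<delta>] pathstart_circlepath[of 0 \<delta>]
    by (simp add: \<gamma>_def pathfinish_def pathstart_def)
  have pimg: "path_image (\<phi> \<circ> \<gamma>) \<subseteq> ball 0 R - {0}"
  proof -
    have "path_image (\<phi> \<circ> \<gamma>) = \<phi> ` sphere 0 \<delta>" by (simp add: path_image_compose pig)
    also have "\<dots> \<subseteq> ball 0 R - {0}" using phi_small phi_nz \<delta> by auto
    finally show ?thesis .
  qed
  have "contour_integral (\<phi> \<circ> \<gamma>) f = 2*pi*\<i> * (\<Sum>p\<in>{0}. winding_number (\<phi> \<circ> \<gamma>) p * residue f p)"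
  proof (rule Residue_theorem[of "ball 0 R"])
    show "\<forall>z. z \<notin> ball 0 R \<longrightarrow> winding_number (\<phi> \<circ> \<gamma>) z = 0"
      using pimg vp loop by (auto intro!: winding_number_zero_outside[of _ "ball 0 R"] valid_path_imp_path)
  qed (use assms vp loop pimg in auto)
  hence eq1: "contour_integral (\<phi> \<circ> \<gamma>) f = 2*pi*\<i> * winding_number (\<phi> \<circ> \<gamma>) 0 * residue f 0" by simp
  have wind: "winding_number (\<phi> \<circ> \<gamma>) 0 = 1"
  proof -
    have "winding_number (\<phi> \<circ> \<gamma>) 0 = 1/(2*pi*\<i>) * contour_integral (\<phi> \<circ> \<gamma>) (\<lambda>w. 1/(w - 0))"
      by (rule winding_number_valid_path[OF vp]) (use pimg in auto)
    also have "contour_integral (\<phi> \<circ> \<gamma>) (\<lambda>w. 1/(w - 0)) = contour_integral \<gamma> (\<lambda>w. deriv \<phi> w * (1/(\<phi> w - 0)))"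
      by (rule comp)
    also have "\<dots> = contour_integral \<gamma> (\<lambda>w. 1/w - 1/(1+w))"
    proof (rule contour_integral_cong)
      fix w assume "w \<in> path_image \<gamma>"
      hence w: "norm w = \<delta>" by (simp add: pig)
      hence "norm w < 1/4" "w \<noteq> 0" using \<delta> by auto
      hence nz: "w \<noteq> 0" "1 + w \<noteq> 0" "norm w < 1/4" using den_nz by auto
      have d: "deriv \<phi> w = c/(1+w)^2" using deriv_phi nz by auto
      have "c/(1+w)^2 * (1/(c*w/(1+w) - 0)) = 1/w - 1/(1+w)"
        using nz assms(3) by (simp add: divide_simps) (simp add: algebra_simps power2_eq_square)
      moreover have pw: "\<phi> w = c*w/(1+w)" by (simp add: \<phi>_def)
      ultimately show "deriv \<phi> w * (1 / (\<phi> w - 0)) = 1 / w - 1 / (1 + w)"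
        by (simp only: d pw)
    qed simp
    also have "\<dots> = contour_integral \<gamma> (\<lambda>w. 1/(w-0)) - contour_integral \<gamma> (\<lambda>w. 1/(1+w))"
    proof -
      have i1: "((\<lambda>w. 1/(w-0)) has_contour_integral 2*pi*\<i>) \<gamma>"
        unfolding \<gamma>_def using \<delta> Cauchy_integral_circlepath_simple[of "\<lambda>_. 1" 0 \<delta> 0] by simp
      have i2: "((\<lambda>w. 1/(1+w)) has_contour_integral 0) \<gamma>"
        by (rule Cauchy_theorem_convex_simple[of _ "ball 0 (1/4)"]) 
           (use \<delta> pig den_nz in \<open>auto intro!: holomorphic_intros simp: \<gamma>_def\<close>)
      show ?thesis
        using has_contour_integral_diff[OF i1 i2] i1 i2 by (simp add: contour_integral_unique)
    qed
    also have "contour_integral \<gamma> (\<lambda>w. 1/(w-0)) = 2*pi*\<i>"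
      unfolding \<gamma>_def using \<delta> Cauchy_integral_circlepath_simple[of "\<lambda>_. 1" 0 \<delta> 0]
      by (intro contour_integral_unique) simp
    also have "contour_integral \<gamma> (\<lambda>w. 1/(1+w)) = 0"
      by (intro contour_integral_unique Cauchy_theorem_convex_simple[of _ "ball 0 (1/4)"]) 
         (use \<delta> pig den_nz in \<open>auto intro!: holomorphic_intros simp: \<gamma>_def\<close>)
    finally show ?thesis by (simp add: o_def)
  qed
  have "contour_integral (\<phi> \<circ> \<gamma>) f = contour_integral \<gamma> g"
    unfolding comp
  proof (rule contour_integral_cong)
    fix w assume "w \<in> path_image \<gamma>"
    hence "norm w < 1/4" using \<delta> pig by auto
    thus "deriv \<phi> w * f (\<phi> w) = g w" by (simp add: deriv_phi g_def)
  qed simp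
  also have "\<dots> = 2*pi*\<i>*residue g 0" using g_int by (rule contour_integral_unique)
  finally have "2*pi*\<i>*residue f 0 = 2*pi*\<i>*residue g 0" using eq1 wind by simp
  thus ?thesis by (simp add: g_def \<phi>_def)
qed



lemma nonvanish_unif:
  fixes f :: "complex \<Rightarrow> complex \<Rightarrow> complex"
  assumes "compact S" "continuous_on (ball 0 \<rho> \<times> UNIV) (\<lambda>(e,w). f e w)" "\<rho> > 0" "\<forall>w\<in>S. f 0 w \<noteq> 0"
  shows "\<exists>\<delta>>0. \<forall>e w. norm e \<le> \<delta> \<longrightarrow> w \<in> S \<longrightarrow> f e w \<noteq> 0"
proof -
  define W where "W = (ball 0 \<rho> \<times> UNIV) \<inter> (\<lambda>(e,w). f e w) -` (-{0})"
  have o1: "open (ball (0::complex) \<rho> \<times> (UNIV::complex set))" by (intro open_Times) auto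
  have o2: "open (-{0::complex})" by auto
  have oW: "open W" unfolding W_def
    by (rule continuous_open_preimage[OF assms(2) o1 o2])
  have sub: "{0} \<times> S \<subseteq> W" using assms(3,4) by (auto simp: W_def)
  obtain X0 where X0: "0 \<in> X0" "open X0" "X0 \<times> S \<subseteq> W"
    using Elementary_Topology.tube_lemma[OF assms(1) oW sub] by blast
  then obtain \<epsilon> where \<epsilon>: "\<epsilon> > 0" "ball 0 \<epsilon> \<subseteq> X0" using open_contains_ball by blast
  show ?thesis
  proof (intro exI[of _ "\<epsilon>/2"] conjI allI impI)
    fix e w :: complex assume ew: "norm e \<le> \<epsilon>/2" "w \<in> S"
    hence "e \<in> X0" using \<epsilon> by auto
    hence "(e, w) \<in> W" using ew X0 by blast
    thus "f e w \<noteq> 0" by (simp add: W_def)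
  next
    show "\<epsilon>/2 > 0" using \<epsilon> by simp
  qed
qed

locale thm2 =
  fixes N k d j :: nat
  assumes N2: "2 \<le> N" and Nk: "N \<le> k" and d1: "1 \<le> d"
begin

definition "mm = 1 + (k - N) * d"
definition Q :: "complex \<Rightarrow> complex \<Rightarrow> complex" where
  "Q x y = (\<Prod>t<k. of_nat t * x + of_nat (k - t) * y)"
definition cc :: "nat \<Rightarrow> complex \<Rightarrow> complex" where
  "cc i e = (e + of_nat i) / (e + of_nat i + 1)"
definition aa :: "nat \<Rightarrow> complex \<Rightarrow> complex" where
  "aa i e = (e + of_nat i + 2) / (e + of_nat i + 1)"
definition Phi :: "nat \<Rightarrow> complex \<Rightarrow> complex" where
  "Phi n e = (\<Prod>r=1..k*n. of_nat r + of_nat k * e) / (\<Prod>r=1..n. (of_nat r + e) ^ N)"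
definition "ee i = (i+1)*(k-N)"
definition MM :: "nat \<Rightarrow> complex \<Rightarrow> complex" where
  "MM i e = of_nat k * Phi (i+1) e * (of_nat d + e) ^ mm / (e + of_nat (i+1)) ^ (ee i + 1)"
definition DD :: "nat \<Rightarrow> (nat \<Rightarrow> complex) \<Rightarrow> complex" where
  "DD l z = 1 / (of_nat k * z l * (2 * z l - z (l - 1) - z (l + 1)))"
definition Right :: "nat \<Rightarrow> (nat \<Rightarrow> complex) \<Rightarrow> complex" where
  "Right s z = (\<Prod>l=s..d. 1 / (z l) ^ N) * (\<Prod>l=Suc s..d. ek k (z (l - 1)) (z l))
      * (\<Prod>l=Suc s..d-1. DD l z) * (1 / (z d) ^ mm)"
definition Rt :: "nat \<Rightarrow> complex \<Rightarrow> (nat \<Rightarrow> complex) \<Rightarrow> complex" where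
  "Rt i w z = (if i + 3 \<le> d then 1 / (of_nat k * z (i+2) * (2 * z (i+2) - w - z (i+3))) else 1)
      * Right (i+2) z"
definition KK :: "nat \<Rightarrow> complex \<Rightarrow> (nat \<Rightarrow> complex) \<Rightarrow> complex" where
  "KK i e z = (if i + 2 \<le> d then
      MM i e / e ^ (j+1) * z (i+1) ^ ee i * Q (z (i+1)) (z (i+2)) / (aa i e * z (i+1) - z (i+2))
        * Rt i (z (i+1)) z
     else of_nat k * Phi d e / e ^ (j+1) / z d)"
definition "FF = integrand N k d j"

lemma ek_split: "ek k x y = of_nat k * x * Q x y"
proof -
  have "ek k x y = (\<Prod>i<Suc k. of_nat i * x + of_nat (k - i) * y)"
    unfolding ek_def by (simp add: atLeast0AtMost lessThan_Suc_atMost)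
  also have "\<dots> = (\<Prod>i<k. of_nat i * x + of_nat (k - i) * y) * (of_nat k * x)"
    by (subst prod.lessThan_Suc) simp
  finally show ?thesis by (simp add: Q_def mult_ac)
qed

lemma Q_homog: "Q (c * x) x = x ^ k * Q c 1"
proof -
  have "Q (c * x) x = (\<Prod>t<k. x * (of_nat t * c + of_nat (k - t) * 1))"
    unfolding Q_def by (intro prod.cong refl) (simp add: algebra_simps)
  also have "\<dots> = (\<Prod>t<k. x) * (\<Prod>t<k. of_nat t * c + of_nat (k - t) * 1)"
    by (rule prod.distrib)
  finally show ?thesis by (simp add: Q_def)
qed

lemma Phi_Suc:
  "Phi (Suc n) e = Phi n e * (\<Prod>r\<in>{k*n<..k*Suc n}. of_nat r + of_nat k * e) / (of_nat (Suc n) + e) ^ N"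
proof -
  have un: "{1..k*Suc n} = {1..k*n} \<union> {k*n<..k*Suc n}" by auto
  have "(\<Prod>r=1..k*Suc n. of_nat r + of_nat k * e) =
        (\<Prod>r=1..k*n. of_nat r + of_nat k * e) * (\<Prod>r\<in>{k*n<..k*Suc n}. of_nat r + (of_nat k * e :: complex))"
    unfolding un by (rule prod.union_disjoint) auto
  moreover have "(\<Prod>r=1..Suc n. (of_nat r + e) ^ N) = (\<Prod>r=1..n. (of_nat r + e) ^ N) * (of_nat (Suc n) + e) ^ N"
    by (simp add: prod.cl_ivl_Suc)
  ultimately show ?thesis unfolding Phi_def by (simp add: field_simps)
qed

lemma prod_reindex_down:
  fixes f :: "nat \<Rightarrow> complex"
  shows "(\<Prod>t<k. f (M + k - t)) = (\<Prod>r\<in>{M<..M + k}. f r)"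
proof (rule prod.reindex_bij_witness[of _ "\<lambda>r. M + k - r" "\<lambda>t. M + k - t"])
qed auto

lemma Q_cc_gen:
  assumes "e + of_nat (Suc i) \<noteq> 0"
  shows "Q (cc i e) 1 = (\<Prod>r\<in>{k*i<..k*Suc i}. of_nat r + of_nat k * e) / (e + of_nat (Suc i)) ^ k"
proof -
  have "Q (cc i e) 1 = (\<Prod>t<k. (of_nat (k*i + k - t) + of_nat k * e) / (e + of_nat (Suc i)))"
    unfolding Q_def
  proof (intro prod.cong refl)
    fix t assume t: "t \<in> {..<k}"
    define B where "B = e + of_nat (Suc i)"
    have X: "of_nat (k*i + k - t) = (of_nat k * of_nat i + of_nat k - of_nat t :: complex)"
      using t by (simp add: of_nat_diff algebra_simps)
    have Y: "of_nat (k - t) = (of_nat k - of_nat t :: complex)" using t by (simp add: of_nat_diff)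
    have C: "cc i e = (B - 1) / B" unfolding cc_def B_def by (simp add: algebra_simps)
    have B: "B \<noteq> 0" using assms by (simp add: B_def)
    have E: "e = B - of_nat i - 1" by (simp add: B_def)
    have "of_nat t * ((B - 1) / B) + (of_nat k - of_nat t) * 1 =
        (of_nat k * of_nat i + of_nat k - of_nat t + of_nat k * (B - of_nat i - 1)) / B"
      using B by (simp add: field_simps)
    then show "of_nat t * cc i e + of_nat (k - t) * 1 =
        (of_nat (k*i + k - t) + of_nat k * e) / (e + of_nat (Suc i))"
      unfolding C X Y B_def[symmetric] by (simp add: E)
  qed
  also have "\<dots> = (\<Prod>t<k. of_nat (k*i + k - t) + of_nat k * e) / (e + of_nat (Suc i)) ^ k"
    by (simp add: prod_dividef)
  also have "(\<Prod>t<k. of_nat (k*i + k - t) + of_nat k * e) =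
      (\<Prod>r\<in>{k*i<..k*i + k}. of_nat r + of_nat k * (e::complex))"
    by (rule prod_reindex_down[where f = "\<lambda>r. of_nat r + of_nat k * e"])
  finally show ?thesis by (simp add: algebra_simps)
qed

lemma Q_cc:
  assumes "e + of_nat (i+2) \<noteq> 0"
  shows "Q (cc (Suc i) e) 1 = (\<Prod>r\<in>{k*Suc i<..k*Suc (Suc i)}. of_nat r + of_nat k * e) / (e + of_nat (i+2)) ^ k"
  using Q_cc_gen[of e "Suc i"] assms by (simp add: add.assoc)

lemma ee_Suc: "ee (Suc i) + N = ee i + k"
  using Nk unfolding ee_def by (simp add: algebra_simps)

lemma MM_Suc:
  assumes A: "e + of_nat (i+1) \<noteq> 0" and B: "e + of_nat (i+2) \<noteq> 0"
  shows "MM (Suc i) e = MM i e * cc (Suc i) e ^ ee i * Q (cc (Suc i) e) 1 / aa i e"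
proof -
  define P where "P = (\<Prod>r\<in>{k*Suc i<..k*Suc (Suc i)}. of_nat r + of_nat k * (e::complex))"
  define a where "a = e + of_nat (i+1)"
  define b where "b = e + of_nat (i+2)"
  have a: "a \<noteq> 0" and b: "b \<noteq> 0" using A B by (auto simp: a_def b_def)
  have ph: "Phi (Suc (Suc i)) e = Phi (Suc i) e * P / b ^ N"
    unfolding Phi_Suc P_def b_def by (simp add: algebra_simps)
  have c: "cc (Suc i) e = a / b" unfolding cc_def a_def b_def by (simp add: algebra_simps)
  have q: "Q (a / b) 1 = P / b ^ k"
  proof -
    have "Q (cc (Suc i) e) 1 = P / b ^ k" unfolding P_def b_def by (rule Q_cc[OF B])
    thus ?thesis by (simp only: c)
  qed
  have aa: "aa i e = b / a" unfolding aa_def a_def b_def by (simp add: algebra_simps)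
  have ex: "b ^ N * b ^ (ee (Suc i) + 1) = b ^ ee i * b ^ k * b"
  proof -
    have "b ^ N * b ^ (ee (Suc i) + 1) = b ^ (ee (Suc i) + N) * b" by (simp add: power_add algebra_simps)
    also have "\<dots> = b ^ (ee i + k) * b" by (simp only: ee_Suc)
    finally show ?thesis by (simp add: power_add)
  qed
  have ex2: "a ^ (ee i + 1) = a ^ ee i * a" by simp
  have lhs: "MM (Suc i) e = of_nat k * Phi (Suc i) e * P * (of_nat d + e) ^ mm / (b ^ N * b ^ (ee (Suc i) + 1))"
  proof -
    have m1: "MM (Suc i) e = of_nat k * Phi (Suc (Suc i)) e * (of_nat d + e)^mm / b^(ee (Suc i) + 1)"
      unfolding MM_def b_def by (simp add: add.assoc)
    show ?thesis unfolding m1 ph using b by (simp add: field_simps)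
  qed
  have rhs: "MM i e = of_nat k * Phi (Suc i) e * (of_nat d + e) ^ mm / (a ^ ee i * a)"
  proof -
    have m1: "MM i e = of_nat k * Phi (Suc i) e * (of_nat d + e)^mm / a^(ee i + 1)"
      unfolding MM_def a_def by simp
    show ?thesis unfolding m1 by simp
  qed
  show ?thesis
    unfolding lhs rhs q c aa ex using a b by (simp add: field_simps power_divide)
qed

lemma Right_upd:
  assumes "t < s" "s \<le> d"
  shows "Right s (z(t := w)) = Right s z"
proof -
  have "(\<Prod>l=s..d. 1 / ((z(t := w)) l) ^ N) = (\<Prod>l=s..d. 1 / (z l) ^ N)"
    using assms by (intro prod.cong) auto
  moreover have "(\<Prod>l=Suc s..d. ek k ((z(t := w)) (l - 1)) ((z(t := w)) l)) = (\<Prod>l=Suc s..d. ek k (z (l - 1)) (z l))"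
    using assms by (intro prod.cong) auto
  moreover have "(\<Prod>l=Suc s..d-1. DD l (z(t := w))) = (\<Prod>l=Suc s..d-1. DD l z)"
    using assms by (intro prod.cong) (auto simp: DD_def)
  moreover have "(z(t := w)) d = z d" if "s \<le> d" using assms that by auto
  ultimately show ?thesis unfolding Right_def using assms by auto
qed

lemma Rt_upd:
  assumes "t \<le> i + 1" "i + 2 \<le> d"
  shows "Rt i w (z(t := v)) = Rt i w z"
  using assms Right_upd[of t "i+2" z v] unfolding Rt_def by auto

lemma Right_split:
  assumes "s + 1 \<le> d"
  shows "Right s z = 1 / (z s) ^ N * ek k (z s) (z (s+1)) * (if s + 2 \<le> d then DD (s+1) z else 1) * Right (s+1) z"
proof -
  have p1: "(\<Prod>l=s..d. 1 / (z l) ^ N) = 1 / (z s) ^ N * (\<Prod>l=Suc s..d. 1 / (z l) ^ N)"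
    using assms by (subst prod.atLeast_Suc_atMost) auto
  have p2: "(\<Prod>l=Suc s..d. ek k (z (l - 1)) (z l)) = ek k (z s) (z (s+1)) * (\<Prod>l=Suc (Suc s)..d. ek k (z (l - 1)) (z l))"
    using assms by (subst prod.atLeast_Suc_atMost) auto
  have p3: "(\<Prod>l=Suc s..d-1. DD l z) = (if s + 2 \<le> d then DD (s+1) z else 1) * (\<Prod>l=Suc (Suc s)..d-1. DD l z)"
    using assms by (cases "s + 2 \<le> d") (auto simp: prod.atLeast_Suc_atMost)
  show ?thesis unfolding Right_def p1 p2 p3 by (simp add: mult_ac)
qed

lemma FF_split:
  "FF y = 1 / (y 0) ^ N * y 0 powi (int N - 2 - int j) * (y 1 - y 0) ^ j * ek k (y 0) (y 1)
     * (if 2 \<le> d then DD 1 y else 1) * (of_nat d + y 0 / (y 1 - y 0)) ^ mm * Right 1 y"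
proof -
  have p1: "(\<Prod>l=0..d. 1 / (y l) ^ N) = 1 / (y 0) ^ N * (\<Prod>l=1..d. 1 / (y l) ^ N)"
    by (subst prod.atLeast_Suc_atMost) auto
  have p2: "(\<Prod>l=1..d. ek k (y (l - 1)) (y l)) = ek k (y 0) (y 1) * (\<Prod>l=2..d. ek k (y (l - 1)) (y l))"
    using d1 by (subst prod.atLeast_Suc_atMost) (auto simp: numeral_2_eq_2)
  have p3: "(\<Prod>l=1..d-1. 1 / (of_nat k * y l * (2 * y l - y (l - 1) - y (l + 1))))
      = (if 2 \<le> d then DD 1 y else 1) * (\<Prod>l=2..d-1. DD l y)"
    using d1 by (cases "2 \<le> d") (auto simp: prod.atLeast_Suc_atMost DD_def numeral_2_eq_2)
  show ?thesis unfolding FF_def integrand_def Let_def p1 p2 p3 Right_def mm_def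
    by (simp add: mult_ac numeral_2_eq_2)
qed

lemma enz: fixes e :: complex assumes "norm e < 1/2" "0 < l" shows "e + of_nat l \<noteq> 0"
proof
  assume "e + of_nat l = 0"
  hence "e = - of_nat l" by (simp add: eq_neg_iff_add_eq_0)
  hence "norm e = of_nat l" by (simp add: norm_of_nat)
  thus False using assms by simp
qed

lemma aa_cc: assumes "norm e < 1/2" shows "aa (Suc i) e = 2 - cc (Suc i) e"
proof -
  have "e + of_nat (Suc i) + 1 \<noteq> 0" using enz[OF assms, of "Suc i + 1"] by (simp add: add.assoc)
  thus ?thesis unfolding aa_def cc_def by (simp add: field_simps)
qed

lemma trans_id:
  assumes i2: "i + 2 \<le> d" and e: "e \<noteq> 0" "norm e < 1/2" and z2: "z (i+2) \<noteq> 0"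
    and D2: "i + 3 \<le> d \<Longrightarrow> aa (Suc i) e * z (i+2) - z (i+3) \<noteq> 0"
  shows "MM i e / e^(j+1) * (cc (Suc i) e * z (i+2))^(ee i) * Q (cc (Suc i) e * z (i+2)) (z (i+2))
           * Rt i (cc (Suc i) e * z (i+2)) z / aa i e = KK (Suc i) e z"
proof -
  define c where "c = cc (Suc i) e"
  define z2 where "z2 = z (i+2)"
  have k0: "(of_nat k :: complex) \<noteq> 0" using N2 Nk by auto
  have a1: "e + of_nat (i+1) \<noteq> 0" by (rule enz[OF e(2)]) auto
  have a2: "e + of_nat (i+2) \<noteq> 0" by (rule enz[OF e(2)]) auto
  have aanz: "aa i e \<noteq> 0" using a1 a2 unfolding aa_def by (simp add: algebra_simps)
  have ej: "e ^ (j+1) \<noteq> 0" using e by simp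
  have z2nz: "z2 \<noteq> 0" using z2 by (simp add: z2_def)
  have mmS: "MM (Suc i) e = MM i e * c ^ ee i * Q c 1 / aa i e"
    unfolding c_def by (rule MM_Suc[OF a1 a2])
  have qh: "Q (c * z2) z2 = z2 ^ k * Q c 1" by (rule Q_homog)
  have pw: "z2 ^ ee i * z2 ^ k = z2 ^ ee (Suc i) * z2 ^ N"
  proof -
    have "z2 ^ ee i * z2 ^ k = z2 ^ (ee i + k)" by (simp add: power_add)
    also have "ee i + k = ee (Suc i) + N" by (simp add: ee_Suc)
    finally show ?thesis by (simp add: power_add)
  qed
  show ?thesis
  proof (cases "i + 3 \<le> d")
    case True
    define z3 where "z3 = z (i+3)"
    define D where "D = aa (Suc i) e * z2 - z3"
    define W where "W = Rt (Suc i) z2 z"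
    have Dnz: "D \<noteq> 0" using D2[OF True] by (simp add: D_def z2_def z3_def)
    have RS: "Right (i+2) z = 1 / z2 ^ N * ek k z2 z3 * ((if i + 4 \<le> d then DD (i+3) z else 1) * Right (i+3) z)"
      using Right_split[of "i+2" z] True by (simp add: z2_def z3_def add.assoc numeral_eq_Suc mult.assoc)
    have Weq: "(if i + 4 \<le> d then DD (i+3) z else 1) * Right (i+3) z = W"
      unfolding W_def Rt_def DD_def z2_def by (simp add: numeral_eq_Suc)
    have R2: "Right (i+2) z = 1 / z2 ^ N * ek k z2 z3 * W" using RS Weq by simp
    have rt: "Rt i (c * z2) z = 1 / (of_nat k * z2 * D) * (1 / z2 ^ N * (of_nat k * z2 * Q z2 z3) * W)"
    proof -
      have "2 * z2 - c * z2 - z3 = D" unfolding D_def c_def aa_cc[OF e(2)] by (simp add: algebra_simps)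
      thus ?thesis unfolding Rt_def using True R2 ek_split[of z2 z3] by (simp add: z2_def z3_def)
    qed
    have kk: "KK (Suc i) e z = MM (Suc i) e / e ^ (j+1) * z2 ^ ee (Suc i) * Q z2 z3 / D * W"
      unfolding KK_def D_def W_def using True by (simp add: z2_def z3_def add.assoc numeral_eq_Suc)
    have "MM i e / e^(j+1) * (c * z2)^(ee i) * Q (c * z2) z2 * Rt i (c * z2) z / aa i e
        = (MM i e * c ^ ee i * Q c 1 / aa i e) / e^(j+1) * Q z2 z3 / D * W * ((z2 ^ ee i * z2 ^ k) / z2 ^ N)"
      unfolding rt qh using k0 z2nz Dnz aanz ej by (simp add: field_simps power_mult_distrib)
    also have "(z2 ^ ee i * z2 ^ k) / z2 ^ N = z2 ^ ee (Suc i)"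
      unfolding pw using z2nz by simp
    finally show ?thesis unfolding kk mmS[symmetric] c_def[symmetric] z2_def[symmetric]
      by (simp add: mult_ac)
  next
    case False
    hence dd: "d = i + 2" using i2 by simp
    have rt: "Rt i (c * z2) z = 1 / z2 ^ N * (1 / z2 ^ mm)"
      unfolding Rt_def Right_def using False by (simp add: dd z2_def)
    have mmd: "MM (Suc i) e = of_nat k * Phi d e"
    proof -
      have "ee (Suc i) + 1 = mm" unfolding ee_def mm_def by (simp add: dd mult.commute)
      moreover have "of_nat (Suc i + 1) + e = of_nat d + e" by (simp add: dd)
      moreover have "of_nat d + e \<noteq> 0" using enz[OF e(2), of d] d1 by (simp add: add.commute)
      ultimately show ?thesis unfolding MM_def by (simp add: dd add.commute)
    qed
    have kk: "KK (Suc i) e z = of_nat k * Phi d e / e ^ (j+1) / z2"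
      unfolding KK_def using False by (simp add: dd z2_def)
    have pw2: "z2 ^ ee i * z2 ^ k = z2 ^ N * z2 ^ mm / z2"
    proof -
      have "ee i + k = N + mm - 1"
      proof -
        obtain q where q: "k = N + q" using Nk le_Suc_ex by blast
        show ?thesis unfolding ee_def mm_def by (simp add: dd q algebra_simps)
      qed
      moreover have "N + mm \<ge> 1" unfolding mm_def by simp
      ultimately have "z2 ^ ee i * z2 ^ k * z2 = z2 ^ N * z2 ^ mm"
        by (metis One_nat_def Suc_diff_1 add_gr_0 less_one not_gr0 power_Suc2 power_add zero_less_one_class.zero_le_one
            le_add_diff_inverse2 add_diff_cancel_left' le_neq_implies_less)
      thus ?thesis using z2nz by (simp add: field_simps)
    qed
    have "MM i e / e^(j+1) * (c * z2)^(ee i) * Q (c * z2) z2 * Rt i (c * z2) z / aa i e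
        = (MM i e * c ^ ee i * Q c 1 / aa i e) / e^(j+1) * ((z2 ^ ee i * z2 ^ k) / (z2 ^ N * z2 ^ mm))"
      unfolding rt qh using k0 z2nz aanz ej by (simp add: field_simps power_mult_distrib)
    also have "(z2 ^ ee i * z2 ^ k) / (z2 ^ N * z2 ^ mm) = 1 / z2"
      unfolding pw2 using z2nz by simp
    finally show ?thesis unfolding kk mmS[symmetric] mmd c_def[symmetric] z2_def[symmetric]
      by simp
  qed
qed

lemma powi_aux:
  fixes x :: complex assumes "x \<noteq> 0"
  shows "1 / x ^ N * x powi (int N - 2 - int j) * x = 1 / x ^ (j+1)"
proof -
  have "x powi (int N - 2 - int j) = x powi (int N - int (j+2))" by (simp add: algebra_simps)
  also have "\<dots> = x powi int N / x powi int (j+2)" by (rule power_int_diff) (use assms in simp)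
  also have "\<dots> = x ^ N / x ^ (j+2)" by (simp only: power_int_of_nat)
  finally have eq: "x powi (int N - 2 - int j) = x ^ N / x ^ (j+2)" .
  show ?thesis unfolding eq using assms by (simp add: field_simps)
qed

lemma level0_id:
  assumes e: "e \<noteq> 0" "norm e < 1/2" and z1: "z 1 \<noteq> 0" and D: "2 \<le> d \<Longrightarrow> aa 0 e * z 1 - z 2 \<noteq> 0"
  shows "FF (z(0 := z 1 * e / (1 + e))) * (z 1 / (1 + e)^2) = KK 0 e z"
proof -
  define t where "t = 1 + e"
  define z1 where "z1 = z 1"
  define \<phi> where "\<phi> = z1 * e / t"
  define y where "y = z(0 := \<phi>)"
  define P where "P = (\<Prod>r\<in>{0<..k}. of_nat r + of_nat k * (e::complex))"
  have tnz: "t \<noteq> 0" using enz[OF e(2), of 1] by (simp add: t_def add.commute)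
  have z1nz: "z1 \<noteq> 0" using z1 by (simp add: z1_def)
  have phinz: "\<phi> \<noteq> 0" using tnz z1nz e by (simp add: \<phi>_def)
  have k0: "(of_nat k :: complex) \<noteq> 0" using N2 Nk by auto
  have y0: "y 0 = \<phi>" and y1: "y 1 = z1" by (simp_all add: y_def z1_def)
  have c0: "cc 0 e = e / t" by (simp add: cc_def t_def add.commute)
  have phic: "\<phi> = cc 0 e * z1" by (simp add: c0 \<phi>_def)
  have q0: "Q (cc 0 e) 1 = P / t ^ k"
    using Q_cc_gen[of e 0] tnz by (simp add: P_def t_def add.commute)
  have ph1: "Phi 1 e = P / t ^ N"
  proof -
    have "{1..k} = {0<..k}" by auto
    thus ?thesis unfolding Phi_def P_def t_def by (simp add: add.commute)
  qed
  have A: "1 / \<phi> ^ N * \<phi> powi (int N - 2 - int j) * ek k \<phi> z1 = of_nat k * z1 ^ k * P / t ^ k / \<phi> ^ (j+1)"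
  proof -
    have "ek k \<phi> z1 = of_nat k * \<phi> * (z1 ^ k * (P / t ^ k))"
      unfolding ek_split phic Q_homog q0 ..
    hence "1 / \<phi> ^ N * \<phi> powi (int N - 2 - int j) * ek k \<phi> z1
        = (1 / \<phi> ^ N * \<phi> powi (int N - 2 - int j) * \<phi>) * (of_nat k * z1 ^ k * P / t ^ k)"
      by (simp add: mult_ac)
    also have "\<dots> = 1 / \<phi> ^ (j+1) * (of_nat k * z1 ^ k * P / t ^ k)"
      unfolding powi_aux[OF phinz] ..
    finally show ?thesis by simp
  qed
  have B: "z1 - \<phi> = z1 / t" using tnz by (simp add: \<phi>_def t_def field_simps)
  have C: "of_nat d + \<phi> / (z1 - \<phi>) = of_nat d + e" unfolding B using tnz z1nz by (simp add: \<phi>_def)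
  have Dphi: "\<phi> ^ (j+1) = z1 ^ (j+1) * e ^ (j+1) / t ^ (j+1)"
    by (simp add: \<phi>_def power_mult_distrib power_divide)
  have Ry: "Right 1 y = Right 1 z" unfolding y_def by (rule Right_upd) (use d1 in auto)
  have FFy: "FF y = of_nat k * z1 ^ k * P / t ^ k / \<phi> ^ (j+1) * (z1 / t) ^ j
      * (if 2 \<le> d then DD 1 y else 1) * (of_nat d + e) ^ mm * Right 1 z"
    unfolding FF_split y0 y1 Ry C B[symmetric] A[symmetric] by (simp add: mult_ac)
  show ?thesis
  proof (cases "2 \<le> d")
    case True
    define z2 where "z2 = z 2"
    define Dn where "Dn = aa 0 e * z1 - z2"
    define W where "W = Rt 0 z1 z"
    have Dnz: "Dn \<noteq> 0" using D True by (simp add: Dn_def z1_def z2_def)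
    have DD1: "DD 1 y = 1 / (of_nat k * z1 * Dn)"
    proof -
      have "2 * z1 - \<phi> - z2 = Dn"
        unfolding Dn_def \<phi>_def aa_def using tnz by (simp add: t_def field_simps)
      thus ?thesis unfolding DD_def by (simp add: y_def z1_def z2_def numeral_2_eq_2)
    qed
    have R1: "Right 1 z = 1 / z1 ^ N * (of_nat k * z1 * Q z1 z2) * W"
    proof -
      have "Right 1 z = 1 / z1 ^ N * ek k z1 z2 * ((if 3 \<le> d then DD 2 z else 1) * Right 2 z)"
        using Right_split[of 1 z] True by (simp add: z1_def z2_def mult.assoc numeral_eq_Suc)
      also have "(if 3 \<le> d then DD 2 z else 1) * Right 2 z = W"
        unfolding W_def Rt_def DD_def by (simp add: numeral_eq_Suc z1_def)
      finally show ?thesis by (simp add: ek_split)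
    qed
    have KK0: "KK 0 e z = MM 0 e / e ^ (j+1) * z1 ^ (k - N) * Q z1 z2 / Dn * W"
      unfolding KK_def using True by (simp add: ee_def z1_def z2_def Dn_def W_def numeral_2_eq_2)
    have MM0: "MM 0 e = of_nat k * (P / t ^ N) * (of_nat d + e) ^ mm / t ^ (k - N + 1)"
      unfolding MM_def ee_def ph1[symmetric] by (simp add: t_def add.commute)
    have pk: "z1 ^ k = z1 ^ (k - N) * z1 ^ N" using Nk by (simp add: power_add[symmetric])
    have pt: "t ^ N * t ^ (k - N + 1) = t ^ k * t" using Nk by (simp add: power_add[symmetric])
    have "FF y * (z1 / t^2) = of_nat k * P * (of_nat d + e) ^ mm / e ^ (j+1) * z1 ^ (k - N) * Q z1 z2 / Dn * W
         / (t ^ k * t)"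
      unfolding FFy DD1 R1 Dphi pk using True tnz z1nz e k0 Dnz
      by (simp add: field_simps power_divide power_mult_distrib power2_eq_square) 
    also have "\<dots> = KK 0 e z"
      unfolding KK0 MM0 pt[symmetric] using tnz e by (simp add: field_simps)
    finally show ?thesis by (simp add: y_def \<phi>_def t_def z1_def)
  next
    case False
    hence dd: "d = 1" using d1 by simp
    have R1: "Right 1 z = 1 / z1 ^ N * (1 / z1 ^ mm)"
      unfolding Right_def by (simp add: dd z1_def)
    have KK0: "KK 0 e z = of_nat k * (P / t ^ N) / e ^ (j+1) / z1"
      unfolding KK_def ph1[symmetric] using False by (simp add: dd z1_def)
    have mmv: "mm = k - N + 1" unfolding mm_def by (simp add: dd)
    have pk: "z1 ^ k * z1 = z1 ^ N * z1 ^ mm" using Nk by (simp add: mmv power_add[symmetric])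
    have pt: "t ^ N * t ^ mm = t ^ k * t" using Nk by (simp add: mmv power_add[symmetric])
    have "FF y * (z1 / t^2) = of_nat k * P * t ^ mm / e ^ (j+1) * (z1 ^ k * z1)
         / (t ^ k * t) / (z1 ^ N * z1 ^ mm) / z1"
      unfolding FFy R1 Dphi using False tnz z1nz e k0
      by (simp add: dd t_def[symmetric] field_simps power_divide power_mult_distrib power2_eq_square)
    also have "\<dots> = KK 0 e z"
      unfolding KK0 pt[symmetric] pk using tnz e z1nz by (simp add: field_simps)
    finally show ?thesis by (simp add: y_def \<phi>_def t_def z1_def)
  qed
qed

end



lemma cnz1: "(of_nat t + 1 :: complex) \<noteq> 0"
proof -
  have "(of_nat t + 1 :: complex) = of_nat (t + 1)" by simp
  thus ?thesis by (simp only: of_nat_eq_0_iff)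
qed

lemma cnz2: "(of_nat t + 2 :: complex) \<noteq> 0"
proof -
  have "(of_nat t + 2 :: complex) = of_nat (t + 2)" by simp
  thus ?thesis by (simp only: of_nat_eq_0_iff)
qed

lemma coef_set_finite: "finite (coef_set i)"
  by (induction i) auto

lemma coef_set_form: "a \<in> coef_set i \<Longrightarrow> \<exists>t\<le>i. a = of_nat t / (of_nat t + 1)"
proof (induction i arbitrary: a)
  case 0 thus ?case by auto
next
  case (Suc i)
  from Suc.prems have "a = 0 \<or> (\<exists>b\<in>coef_set i. a = 1 / (2 - b))" by auto
  thus ?case
  proof
    assume "a = 0" thus ?thesis by (intro exI[of _ 0]) auto
  next
    assume "\<exists>b\<in>coef_set i. a = 1 / (2 - b)"
    then obtain b where b: "b \<in> coef_set i" "a = 1 / (2 - b)" by blast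
    from Suc.IH[OF b(1)] obtain t where t: "t \<le> i" "b = of_nat t / (of_nat t + 1)" by blast
    note nz = cnz1[of t] and nz2 = cnz2[of t]
    have "a = of_nat (Suc t) / (of_nat (Suc t) + 1)"
      unfolding b(2) t(2) using nz nz2 by (simp add: field_simps)
    thus ?thesis using t(1) by (intro exI[of _ "Suc t"]) auto
  qed
qed

lemma zero_in_coef: "0 \<in> coef_set i"
  by (cases i) auto

lemma coef_two_nz: "a \<in> coef_set i \<Longrightarrow> 2 - a \<noteq> 0"
proof -
  assume a: "a \<in> coef_set i"
  from coef_set_form[OF a] obtain t where t: "a = of_nat t / (of_nat t + 1)" by blast
  have "2 - a = (of_nat t + 2) / (of_nat t + 1)" unfolding t using cnz1[of t] by (simp add: field_simps)
  thus ?thesis using cnz1[of t] cnz2[of t] by simp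
qed

lemma coef_chain: "of_nat i / (of_nat i + 1) \<in> coef_set i"
proof (induction i)
  case 0 thus ?case by simp
next
  case (Suc i)
  note nz = cnz1[of i] and nz2 = cnz2[of i]
  have "of_nat (Suc i) / (of_nat (Suc i) + 1) = 1 / (2 - of_nat i / (of_nat i + 1) :: complex)"
    using nz nz2 by (simp add: field_simps)
  thus ?case using Suc.IH by auto
qed

context thm2
begin

definition Gen :: "nat \<Rightarrow> (nat \<Rightarrow> complex) \<Rightarrow> bool" where
  "Gen i z \<longleftrightarrow> (\<forall>l. i+1 \<le> l \<and> l \<le> d \<longrightarrow> z l \<noteq> 0) \<and>
     (\<forall>l. i+2 \<le> l \<and> l+1 \<le> d \<longrightarrow> 2 * z l - z (l-1) - z (l+1) \<noteq> 0) \<and>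
     (i+2 \<le> d \<longrightarrow> (\<forall>p\<in>res_points d i z. p \<noteq> 2 * z (i+1) - z (i+2)))"

lemma hol_Phi: "Phi n holomorphic_on ball 0 (1/2)"
proof -
  have "(\<Prod>r=1..n. (of_nat r + e) ^ N) \<noteq> 0" if "e \<in> ball 0 (1/2)" for e :: complex
  proof -
    have "of_nat r + e \<noteq> 0" if "r \<in> {1..n}" for r
      using enz[of e r] \<open>e \<in> ball 0 (1/2)\<close> that by (auto simp: add.commute)
    thus ?thesis by (simp add: prod_zero_iff)
  qed
  thus ?thesis unfolding Phi_def by (intro holomorphic_intros) auto
qed

lemma hol_MM: "MM i holomorphic_on ball 0 (1/2)"
proof -
  have "e + of_nat (i+1) \<noteq> 0" if "e \<in> ball 0 (1/2)" for e :: complex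
    using enz[of e "i+1"] that by auto
  thus ?thesis unfolding MM_def by (intro holomorphic_intros hol_Phi) auto
qed

lemma KK_upd:
  assumes "i + 2 \<le> d"
  shows "KK i e (z(Suc i := w)) = MM i e / e^(j+1) * w^(ee i) * Q w (z (i+2)) / (aa i e * w - z (i+2)) * Rt i w z"
  using assms Rt_upd[of "Suc i" i w z w] unfolding KK_def by simp

lemma res_points_Suc:
  assumes "Suc i < d"
  shows "res_points d (Suc i) z = insert 0 ((\<lambda>a. z (i+2) / (2 - a)) ` coef_set i)"
  using assms unfolding res_points_def by (simp add: numeral_eq_Suc)

lemma cc0: "cc (Suc i) 0 = of_nat (Suc i) / of_nat (i+2)"
  unfolding cc_def by (simp add: add.commute add.left_commute)

lemma aa0: "aa i 0 = of_nat (i+2) / of_nat (Suc i)"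
  unfolding aa_def by (simp add: add_ac numeral_eq_Suc)

lemma pc_in:
  assumes "Suc i < d"
  shows "cc (Suc i) 0 * z (i+2) \<in> res_points d (Suc i) z"
proof -
  have "z (i+2) / (2 - of_nat i / (of_nat i + 1)) = cc (Suc i) 0 * z (i+2)"
    unfolding cc0 using cnz1[of i] cnz2[of i] by (simp add: field_simps add_ac)
  thus ?thesis unfolding res_points_Suc[OF assms] using coef_chain[of i] by force
qed

lemma gen_step:
  assumes si: "Suc i < d" and G: "Gen (Suc i) z"
    and w: "w \<notin> res_points d (Suc i) z" and wb: "i + 3 \<le> d \<Longrightarrow> w \<noteq> 2 * z (i+2) - z (i+3)"
  shows "Gen i (z(Suc i := w))"
proof -
  have RP: "res_points d (Suc i) z = insert 0 ((\<lambda>a. z (i+2) / (2 - a)) ` coef_set i)"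
    by (rule res_points_Suc[OF si])
  have z2: "z (i+2) \<noteq> 0" using G si unfolding Gen_def by auto
  have w0: "w \<noteq> 0" using w RP by auto
  have c1: "\<forall>l. i+1 \<le> l \<and> l \<le> d \<longrightarrow> (z(Suc i := w)) l \<noteq> 0"
    using G w0 unfolding Gen_def by auto
  have c2: "\<forall>l. i+2 \<le> l \<and> l+1 \<le> d \<longrightarrow> 2 * (z(Suc i := w)) l - (z(Suc i := w)) (l-1) - (z(Suc i := w)) (l+1) \<noteq> 0"
  proof (intro allI impI)
    fix l assume l: "i+2 \<le> l \<and> l+1 \<le> d"
    show "2 * (z(Suc i := w)) l - (z(Suc i := w)) (l-1) - (z(Suc i := w)) (l+1) \<noteq> 0"
    proof (cases "l = i+2")
      case True
      hence "i + 3 \<le> d" using l by simp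
      from wb[OF this] have "w \<noteq> 2 * z (i+2) - z (i+3)" .
      thus ?thesis using True by (auto simp: numeral_eq_Suc algebra_simps)
    next
      case False
      hence "Suc i + 2 \<le> l" using l by simp
      thus ?thesis using G l unfolding Gen_def by auto
    qed
  qed
  have c3: "\<forall>q\<in>res_points d i (z(Suc i := w)). q \<noteq> 2 * (z(Suc i := w)) (i+1) - (z(Suc i := w)) (i+2)"
  proof
    fix q assume q: "q \<in> res_points d i (z(Suc i := w))"
    have zz: "(z(Suc i := w)) (i+1) = w" "(z(Suc i := w)) (i+2) = z (i+2)" by simp_all
    show "q \<noteq> 2 * (z(Suc i := w)) (i+1) - (z(Suc i := w)) (i+2)"
      unfolding zz
    proof
      assume eq: "q = 2 * w - z (i+2)"
      have half: "z (i+2) / (2 - 0) \<in> res_points d (Suc i) z" unfolding RP using zero_in_coef[of i] by blast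
      show False
      proof (cases "q = 0")
        case True
        hence "w = z (i+2) / (2 - 0)" using eq by (simp add: field_simps)
        thus False using w half by metis
      next
        case False
        with q si have "i \<noteq> 0" and "\<exists>a\<in>coef_set (i - 1). q = w / (2 - a)"
          unfolding res_points_def by (auto split: if_splits)
        then obtain a where a: "a \<in> coef_set (i - 1)" "q = w / (2 - a)" by blast
        have a2: "2 - a \<noteq> 0" by (rule coef_two_nz[OF a(1)])
        have a': "1 / (2 - a) \<in> coef_set i"
          using a(1) \<open>i \<noteq> 0\<close> by (cases i) auto
        have a'2: "2 - 1 / (2 - a) \<noteq> 0" by (rule coef_two_nz[OF a'])
        have "w = (2 - a) * (2 * w - z (i+2))" using a(2) eq a2 by (simp add: field_simps)
        hence "w * (2 - 1 / (2 - a)) = z (i+2)" using a2 by (simp add: field_simps)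
        hence "w = z (i+2) / (2 - 1 / (2 - a))" using a'2 by (simp add: field_simps)
        hence "w \<in> res_points d (Suc i) z" unfolding RP using a' by blast
        thus False using w by simp
      qed
    qed
  qed
  show ?thesis unfolding Gen_def using c1 c2 c3 by auto
qed

lemma hol_aa: "aa i holomorphic_on ball 0 (1/2)"
proof -
  have "e + of_nat i + 1 \<noteq> 0" if "e \<in> ball 0 (1/2)" for e :: complex
    using enz[of e "i+1"] that by (auto simp: add_ac)
  thus ?thesis unfolding aa_def by (intro holomorphic_intros) auto
qed

lemma cont_aa: "continuous_on (ball 0 (1/2)) (aa i)"
  using hol_aa holomorphic_on_imp_continuous_on by blast

lemma aa_cc_inv: assumes "norm e < 1/2" shows "aa i e * cc (Suc i) e = 1"
proof -
  have "e + of_nat i + 1 \<noteq> 0" "e + of_nat i + 2 \<noteq> 0"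
    using enz[OF assms, of "i+1"] enz[OF assms, of "i+2"] by (auto simp: add_ac)
  moreover have "cc (Suc i) e = (e + of_nat i + 1) / (e + of_nat i + 2)"
    unfolding cc_def by (simp add: add_ac)
  ultimately show ?thesis unfolding aa_def by simp
qed

lemma cc_lip: assumes "norm e < 1/2" shows "norm (cc (Suc i) e - cc (Suc i) 0) \<le> norm e"
proof -
  have n1: "e + of_nat (i+2) \<noteq> 0" using enz[OF assms, of "i+2"] by simp
  have eq: "cc (Suc i) e - cc (Suc i) 0 = e / ((e + of_nat (i+2)) * of_nat (i+2))"
    unfolding cc_def using n1 cnz2[of i] by (simp add: field_simps add_ac)
  have "norm (e + of_nat (i+2)) \<ge> 1"
  proof -
    have "norm (of_nat (i+2) :: complex) \<le> norm (e + of_nat (i+2)) + norm e"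
      using norm_triangle_ineq4[of "e + of_nat (i+2)" e] by simp
    moreover have "norm (of_nat (i+2) :: complex) = real (i+2)" by (simp only: norm_of_nat)
    ultimately show ?thesis using assms by simp
  qed
  moreover have "norm (of_nat (i+2) :: complex) \<ge> 1" by (simp only: norm_of_nat)
  ultimately have "norm ((e + of_nat (i+2)) * of_nat (i+2)) \<ge> 1"
    by (simp add: norm_mult) (metis mult_mono' mult_1 norm_ge_zero zero_le_one order_trans)
  hence "norm e / norm ((e + of_nat (i+2)) * of_nat (i+2)) \<le> norm e / 1"
    by (intro divide_left_mono) auto
  thus ?thesis unfolding eq by (simp add: norm_divide)
qed

lemma hol_KK_e:
  assumes "\<rho> \<le> 1/2" and den: "i + 2 \<le> d \<Longrightarrow> \<forall>e\<in>ball 0 \<rho>. aa i e * z (i+1) - z (i+2) \<noteq> 0"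
  shows "(\<lambda>e. KK i e z) holomorphic_on ball 0 \<rho> - {0}"
proof (cases "i + 2 \<le> d")
  case True
  have "(\<lambda>e. MM i e / e ^ (j+1) * z (i+1) ^ ee i * Q (z (i+1)) (z (i+2)) / (aa i e * z (i+1) - z (i+2)) * Rt i (z (i+1)) z)
      holomorphic_on ball 0 \<rho> - {0}"
    using den[OF True] assms(1)
    by (intro holomorphic_intros holomorphic_on_subset[OF hol_MM] holomorphic_on_subset[OF hol_aa]) auto
  thus ?thesis unfolding KK_def using True by simp
next
  case False
  have "(\<lambda>e. of_nat k * Phi d e / e ^ (j+1) / z d) holomorphic_on ball 0 \<rho> - {0}"
    using assms(1) by (intro holomorphic_intros holomorphic_on_subset[OF hol_Phi]) auto
  thus ?thesis unfolding KK_def using False by simp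
qed

lemma hol_G0:
  assumes "z (i+2) \<noteq> 0" and "i + 3 \<le> d \<Longrightarrow> \<forall>w\<in>A. 2 * z (i+2) - w - z (i+3) \<noteq> 0"
  shows "(\<lambda>w. w ^ ee i * Q w (z (i+2)) * Rt i w z) holomorphic_on A"
proof -
  have q: "(\<lambda>w. Q w c) holomorphic_on A" for c unfolding Q_def by (intro holomorphic_intros)
  have r: "(\<lambda>w. Rt i w z) holomorphic_on A"
  proof (cases "i + 3 \<le> d")
    case True
    have k0: "of_nat k \<noteq> (0::complex)" using N2 Nk by auto
    have eq: "(\<lambda>w. Rt i w z) = (\<lambda>w. 1 / (of_nat k * z (i+2) * (2 * z (i+2) - w - z (i+3))) * Right (i+2) z)"
      using True by (simp add: Rt_def fun_eq_iff)
    have nz: "\<forall>w\<in>A. of_nat k * z (i+2) * (2 * z (i+2) - w - z (i+3)) \<noteq> 0"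
      using assms(1) assms(2)[OF True] k0 by simp
    show ?thesis unfolding eq by (intro holomorphic_intros) (use nz in auto)
  next
    case False thus ?thesis unfolding Rt_def by simp
  qed
  show ?thesis by (intro holomorphic_intros q r)
qed

lemma cont_pair:
  fixes T :: "complex \<Rightarrow> complex" and G :: "complex \<Rightarrow> complex"
  assumes "continuous_on A T" "continuous_on B G" "continuous_on A a" "A \<subseteq> ball 0 (1/2)"
    and "\<forall>e\<in>A. \<forall>w\<in>B. a e * w - c \<noteq> 0"
  shows "continuous_on (A \<times> B) (\<lambda>(e,w). T e * G w / (a e * w - c))"
proof -
  have cT: "continuous_on (A \<times> B) (\<lambda>x. T (fst x))"
    by (rule continuous_on_compose2[OF assms(1) continuous_on_fst]) auto
  have cG: "continuous_on (A \<times> B) (\<lambda>x. G (snd x))"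
    by (rule continuous_on_compose2[OF assms(2) continuous_on_snd]) auto
  have ca: "continuous_on (A \<times> B) (\<lambda>x. a (fst x))"
    by (rule continuous_on_compose2[OF assms(3) continuous_on_fst]) auto
  have "continuous_on (A \<times> B) (\<lambda>x. T (fst x) * G (snd x) / (a (fst x) * snd x - c))"
    using assms(5) by (intro continuous_intros cT cG ca) auto
  thus ?thesis by (simp add: case_prod_beta)
qed

lemma point_residue:
  assumes si: "Suc i < d" and G: "Gen (Suc i) z" and p: "p \<in> res_points d (Suc i) z"
    and IH: "\<And>z'. Gen i z' \<Longrightarrow> iter_res d i FF z' = residue (\<lambda>e. KK i e z') 0"
  shows "residue (\<lambda>w. iter_res d i FF (z(Suc i := w))) p =
     (if p = cc (Suc i) 0 * z (i+2) then residue (\<lambda>e. KK (Suc i) e z) 0 else 0)"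
proof -
  define z2 where "z2 = z (i+2)"
  define z3 where "z3 = z (i+3)"
  define pc where "pc = cc (Suc i) 0 * z2"
  define RP where "RP = res_points d (Suc i) z"
  have i2: "i + 2 \<le> d" using si by simp
  have finRP: "finite RP" unfolding RP_def res_points_Suc[OF si] using coef_set_finite by simp
  define B where "B = RP \<union> (if i + 3 \<le> d then {2 * z2 - z3} else {})"
  have finB: "finite B" using finRP by (simp add: B_def)
  obtain \<rho> where \<rho>: "\<rho> > 0" and avoid: "\<forall>w\<in>ball p \<rho>. w \<in> UNIV \<and> (w \<noteq> p \<longrightarrow> w \<notin> B)"
    using finite_ball_avoid[OF open_UNIV finB, of p] by auto
  have z2nz: "z2 \<noteq> 0" using G si unfolding Gen_def z2_def by auto
  have G3: "\<forall>q\<in>RP. q \<noteq> 2 * z2 - z3" if "i + 3 \<le> d"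
    using G that unfolding Gen_def RP_def z2_def z3_def by (auto simp: numeral_eq_Suc)
  have pRP: "p \<in> RP" using p by (simp add: RP_def)
  have pcRP: "pc \<in> RP" unfolding pc_def RP_def z2_def by (rule pc_in[OF si])
  have pB: "p \<noteq> 2 * z2 - z3" if "i + 3 \<le> d" using G3[OF that] pRP by blast
  have avoidB: "w \<noteq> 2 * z2 - z3" if "w \<in> ball p \<rho>" "i + 3 \<le> d" for w
  proof (cases "w = p")
    case True thus ?thesis using pB[OF that(2)] by simp
  next
    case False thus ?thesis using avoid that by (auto simp: B_def)
  qed
  have genw: "Gen i (z(Suc i := w))" if "w \<in> ball p \<rho> - {p}" for w
  proof (rule gen_step[OF si G])
    show "w \<notin> res_points d (Suc i) z" using avoid that by (auto simp: B_def RP_def)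
    show "i + 3 \<le> d \<Longrightarrow> w \<noteq> 2 * z (i + 2) - z (i + 3)"
      using avoidB[of w] that by (auto simp: z2_def z3_def)
  qed
  define T where "T = (\<lambda>e. MM i e / e ^ (j+1))"
  define G0 where "G0 = (\<lambda>w. w ^ ee i * Q w z2 * Rt i w z)"
  have Keq: "KK i e (z(Suc i := w)) = T e * G0 w / (aa i e * w - z2)" for e w
    unfolding KK_upd[OF i2] T_def G0_def z2_def by (simp add: field_simps)
  have holG0: "G0 holomorphic_on ball p \<rho>"
  proof -
    have "2 * z (i+2) - w - z (i+3) \<noteq> 0" if "i + 3 \<le> d" "w \<in> ball p \<rho>" for w
    proof
      assume "2 * z (i+2) - w - z (i+3) = 0"
      hence "w = 2 * z2 - z3" by (simp add: z2_def z3_def algebra_simps)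
      thus False using avoidB[OF that(2,1)] by simp
    qed
    thus ?thesis unfolding G0_def z2_def by (intro hol_G0) (use z2nz in \<open>auto simp: z2_def\<close>)
  qed
  have holT: "T holomorphic_on ball 0 (1/2) - {0}"
    unfolding T_def by (intro holomorphic_intros holomorphic_on_subset[OF hol_MM]) auto
  define V where "V = (\<lambda>e. if p = pc then KK (Suc i) e z else 0)"
  define X where "X = (if p = pc then residue (\<lambda>e. KK (Suc i) e z) 0 else 0)"
  have "residue (\<lambda>w. iter_res d i FF (z(Suc i := w))) p = X"
  proof (rule residue_swap[where K = "\<lambda>e w. KK i e (z(Suc i := w))" and V = V, OF \<rho>])
    fix w assume "w \<in> ball p \<rho> - {p}"
    thus "iter_res d i FF (z(Suc i := w)) = residue (\<lambda>e. KK i e (z(Suc i := w))) 0"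
      using IH genw by blast
  next
    fix r assume r: "0 < r" "r < \<rho>"
    define S where "S = (if p = pc then sphere p r else cball p r)"
    have cS: "compact S" by (simp add: S_def)
    have spS: "sphere p r \<subseteq> S" by (auto simp: S_def)
    have SB: "S \<subseteq> ball p \<rho>" using r by (auto simp: S_def)
    define nd where "nd = (\<lambda>e w. (aa i e * w - z2) * (if i + 3 \<le> d then aa (Suc i) e * z2 - z3 else 1))"
    have cnd: "continuous_on (ball 0 (1/2) \<times> UNIV) (\<lambda>(e,w). nd e w)"
    proof -
      have c1: "continuous_on (ball 0 (1/2) \<times> (UNIV::complex set)) (\<lambda>x. aa i (fst x))"
        by (rule continuous_on_compose2[OF cont_aa continuous_on_fst]) auto
      have c2: "continuous_on (ball 0 (1/2) \<times> (UNIV::complex set)) (\<lambda>x. aa (Suc i) (fst x))"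
        by (rule continuous_on_compose2[OF cont_aa continuous_on_fst]) auto
      show ?thesis unfolding nd_def case_prod_beta
        by (cases "i + 3 \<le> d") (simp_all, (intro continuous_intros c1 c2)+)
    qed
    have aa0pc: "aa i 0 * pc = z2" unfolding pc_def using aa_cc_inv[of 0 i] by (simp add: mult.assoc[symmetric])
    have nd0: "\<forall>w\<in>S. nd 0 w \<noteq> 0"
    proof
      fix w assume w: "w \<in> S"
      have "w \<noteq> pc"
      proof (cases "p = pc")
        case True thus ?thesis using w r by (auto simp: S_def)
      next
        case False
        hence "pc \<in> B" "pc \<noteq> p" using pcRP by (auto simp: B_def)
        thus ?thesis using avoid w SB by auto
      qed
      moreover have "aa i 0 \<noteq> 0" using aa_cc_inv[of 0 i] by auto
      ultimately have f1: "aa i 0 * w - z2 \<noteq> 0" using aa0pc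
        by (metis eq_iff_diff_eq_0 mult_cancel_left)
      have f2: "aa (Suc i) 0 * z2 - z3 \<noteq> 0" if "i + 3 \<le> d"
      proof -
        have "aa (Suc i) 0 * z2 - z3 = 2 * z2 - pc - z3"
          unfolding pc_def aa_cc[of 0 i, simplified] by (simp add: algebra_simps)
        thus ?thesis using G3[OF that] pcRP by auto
      qed
      show "nd 0 w \<noteq> 0" unfolding nd_def using f1 f2 by auto
    qed
    obtain \<delta>0 where \<delta>0: "\<delta>0 > 0" "\<forall>e w. norm e \<le> \<delta>0 \<longrightarrow> w \<in> S \<longrightarrow> nd e w \<noteq> 0"
      using nonvanish_unif[OF cS cnd _ nd0] by auto
    define \<delta>' where "\<delta>' = min \<delta>0 (min (r / (norm z2 + 1)) (1/4))"
    have pos1: "r / (norm z2 + 1) > 0" using r by (intro divide_pos_pos) (auto intro: add_nonneg_pos)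
    have \<delta>': "\<delta>' > 0" "\<delta>' \<le> \<delta>0" "\<delta>' \<le> r / (norm z2 + 1)" "\<delta>' \<le> 1/4"
      using \<delta>0 pos1 unfolding \<delta>'_def by (auto simp del: divide_const_simps)
    define \<delta> where "\<delta> = \<delta>' / 2"
    have \<delta>: "0 < \<delta>" "\<delta> < \<delta>'" using \<delta>' by (auto simp: \<delta>_def)
    have ndS: "nd e w \<noteq> 0" if "norm e < \<delta>'" "w \<in> S" for e w
      using \<delta>0(2) \<delta>' that by auto
    have small: "norm e < 1/2" if "norm e < \<delta>'" for e using that \<delta>' by auto
    have den_nz: "aa i e * w - z2 \<noteq> 0" if "norm e < \<delta>'" "w \<in> S" for e w
      using ndS[OF that] by (auto simp: nd_def)
    have den2_nz: "aa (Suc i) e * z2 - z3 \<noteq> 0" if "norm e < \<delta>'" "i + 3 \<le> d" for e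
    proof -
      have "p + r \<in> S" using r by (auto simp: S_def dist_norm)
      from ndS[OF that(1) this] show ?thesis using that(2) by (auto simp: nd_def)
    qed
    have near: "norm (cc (Suc i) e * z2 - pc) < r" if "norm e < \<delta>'" for e
    proof -
      have "norm (cc (Suc i) e * z2 - pc) = norm (cc (Suc i) e - cc (Suc i) 0) * norm z2"
        unfolding pc_def by (simp add: norm_mult[symmetric] algebra_simps)
      also have "\<dots> \<le> norm e * norm z2"
        using cc_lip[OF small[OF that]] by (intro mult_right_mono) auto
      also have "\<dots> \<le> norm e * (norm z2 + 1)" by (intro mult_left_mono) auto
      also have "\<dots> < r / (norm z2 + 1) * (norm z2 + 1)"
        using that \<delta>' by (intro mult_strict_right_mono) (auto intro: add_nonneg_pos)
      also have "\<dots> = r"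
      proof -
        have "norm z2 + 1 > 0" using norm_ge_zero[of z2] by linarith
        thus ?thesis by simp
      qed
      finally show ?thesis .
    qed
    show "\<exists>\<delta> \<delta>'. 0 < \<delta> \<and> \<delta> < \<delta>' \<and>
        (\<forall>w\<in>sphere p r. (\<lambda>e. KK i e (z(Suc i := w))) holomorphic_on ball 0 \<delta>' - {0}) \<and>
        continuous_on (sphere 0 \<delta> \<times> sphere p r) (\<lambda>(e, w). KK i e (z(Suc i := w))) \<and>
        (\<forall>e\<in>sphere 0 \<delta>. ((\<lambda>w. KK i e (z(Suc i := w))) has_contour_integral 2 * pi * \<i> * V e) (circlepath p r)) \<and>
        (V has_contour_integral 2 * pi * \<i> * X) (circlepath 0 \<delta>)"
    proof (rule exI[of _ \<delta>], rule exI[of _ \<delta>'], intro conjI ballI)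
      show "0 < \<delta>" "\<delta> < \<delta>'" by (rule \<delta>)+
    next
      fix w assume w: "w \<in> sphere p r"
      have wS: "w \<in> S" using w spS by auto
      have dn: "\<forall>e\<in>ball 0 \<delta>' - {0}. aa i e * w - z2 \<noteq> 0"
      proof
        fix e :: complex assume "e \<in> ball 0 \<delta>' - {0}"
        hence "norm e < \<delta>'" by simp
        thus "aa i e * w - z2 \<noteq> 0" by (rule den_nz[OF _ wS])
      qed
      have sub: "ball 0 \<delta>' - {0} \<subseteq> ball 0 (1/2) - {0}" "ball 0 \<delta>' - {0} \<subseteq> ball 0 (1/2)" using \<delta>' by auto
      have "(\<lambda>e. T e * G0 w / (aa i e * w - z2)) holomorphic_on ball 0 \<delta>' - {0}"
        by (intro holomorphic_intros holomorphic_on_subset[OF holT sub(1)] holomorphic_on_subset[OF hol_aa sub(2)]) (use dn in blast)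
      thus "(\<lambda>e. KK i e (z(Suc i := w))) holomorphic_on ball 0 \<delta>' - {0}" unfolding Keq .
    next
      have "continuous_on (sphere 0 \<delta> \<times> sphere p r) (\<lambda>(e, w). T e * G0 w / (aa i e * w - z2))"
      proof (rule cont_pair)
        show "continuous_on (sphere 0 \<delta>) T"
          by (rule holomorphic_on_imp_continuous_on, rule holomorphic_on_subset[OF holT]) (use \<delta> \<delta>' in auto)
        show "continuous_on (sphere p r) G0"
          by (rule holomorphic_on_imp_continuous_on, rule holomorphic_on_subset[OF holG0]) (use r in auto)
        show "continuous_on (sphere 0 \<delta>) (aa i)"
          by (rule continuous_on_subset[OF cont_aa]) (use \<delta> \<delta>' in auto)
        show "sphere 0 \<delta> \<subseteq> ball 0 (1/2)" using \<delta> \<delta>' by auto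
        show "\<forall>e\<in>sphere 0 \<delta>. \<forall>w\<in>sphere p r. aa i e * w - z2 \<noteq> 0"
        proof (intro ballI)
          fix e w :: complex assume "e \<in> sphere 0 \<delta>" "w \<in> sphere p r"
          hence "norm e < \<delta>'" "w \<in> S" using \<delta> spS by auto
          thus "aa i e * w - z2 \<noteq> 0" by (rule den_nz)
        qed
      qed
      thus "continuous_on (sphere 0 \<delta> \<times> sphere p r) (\<lambda>(e, w). KK i e (z(Suc i := w)))"
        unfolding Keq .
    next
      fix e :: complex assume e: "e \<in> sphere 0 \<delta>"
      have ne: "norm e < \<delta>'" "e \<noteq> 0" using e \<delta> by auto
      show "((\<lambda>w. KK i e (z(Suc i := w))) has_contour_integral 2 * pi * \<i> * V e) (circlepath p r)"
      proof (cases "p = pc")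
        case False
        have "((\<lambda>w. T e * G0 w / (aa i e * w - z2)) has_contour_integral 0) (circlepath p r)"
        proof (rule Cauchy_theorem_convex_simple[of _ "cball p r"])
          show "(\<lambda>w. T e * G0 w / (aa i e * w - z2)) holomorphic_on cball p r"
            using den_nz[OF ne(1)] False r
            by (intro holomorphic_intros holomorphic_on_subset[OF holG0]) (auto simp: S_def)
        qed (use r in auto)
        thus ?thesis unfolding Keq V_def using False by simp
      next
        case True
        define q where "q = cc (Suc i) e * z2"
        define g where "g = (\<lambda>w. T e * G0 w / aa i e)"
        have aainv: "aa i e * cc (Suc i) e = 1" by (rule aa_cc_inv[OF small[OF ne(1)]])
        have fe: "T e * G0 w / (aa i e * w - z2) = g w / (w - q)" for w
        proof -
          have "aa i e * w - z2 = aa i e * (w - q)"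
            unfolding q_def using aainv by (simp add: algebra_simps mult.assoc[symmetric])
          thus ?thesis unfolding g_def by simp
        qed
        have "((\<lambda>w. g w / (w - q)) has_contour_integral 2 * of_real pi * \<i> * g q) (circlepath p r)"
        proof (rule Cauchy_integral_circlepath_simple)
          show "g holomorphic_on cball p r"
            unfolding g_def using r by (intro holomorphic_intros holomorphic_on_subset[OF holG0]) auto
          show "norm (q - p) < r" using near[OF ne(1)] True by (simp add: q_def pc_def)
        qed
        moreover have "g q = KK (Suc i) e z"
        proof -
          have D2: "i + 3 \<le> d \<Longrightarrow> aa (Suc i) e * z (i+2) - z (i+3) \<noteq> 0"
            using den2_nz[OF ne(1)] by (simp add: z2_def z3_def)
          have z2': "z (i+2) \<noteq> 0" using z2nz by (simp add: z2_def)
          have tid: "MM i e / e^(j+1) * (cc (Suc i) e * z (i+2))^(ee i) * Q (cc (Suc i) e * z (i+2)) (z (i+2))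
           * Rt i (cc (Suc i) e * z (i+2)) z / aa i e = KK (Suc i) e z"
            by (rule trans_id[where i=i and e=e and z=z, OF i2 ne(2) small[OF ne(1)] z2']) (rule D2)
          show ?thesis unfolding g_def q_def T_def G0_def z2_def
            using tid by (simp add: mult.assoc)
        qed
        ultimately show ?thesis unfolding Keq V_def fe using True by simp
      qed
    next
      show "(V has_contour_integral 2 * pi * \<i> * X) (circlepath 0 \<delta>)"
      proof (cases "p = pc")
        case False thus ?thesis by (simp add: V_def X_def has_contour_integral_0)
      next
        case True
        have hol: "(\<lambda>e. KK (Suc i) e z) holomorphic_on ball 0 \<delta>' - {0}"
        proof (rule hol_KK_e)
          show "\<delta>' \<le> 1/2" using \<delta>' by simp
          show "\<forall>e\<in>ball 0 \<delta>'. aa (Suc i) e * z (Suc i + 1) - z (Suc i + 2) \<noteq> 0" if "Suc i + 2 \<le> d"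
            using den2_nz that by (auto simp: z2_def z3_def numeral_eq_Suc)
        qed
        have "((\<lambda>e. KK (Suc i) e z) has_contour_integral 2 * pi * \<i> * residue (\<lambda>e. KK (Suc i) e z) 0) (circlepath 0 \<delta>)"
          by (rule base_residue[of "ball 0 \<delta>'"]) (use \<delta> hol in auto)
        thus ?thesis using True by (simp add: V_def X_def)
      qed
    qed
  qed
  thus ?thesis by (simp add: X_def pc_def z2_def)
qed

end



lemma higher_deriv_real_complex:
  fixes g :: "complex \<Rightarrow> complex" and f :: "real \<Rightarrow> real"
  assumes hol: "g holomorphic_on ball 0 \<rho>"
    and eq: "\<And>x. \<bar>x\<bar> < \<rho> \<Longrightarrow> g (of_real x) = of_real (f x)"
  shows "\<bar>x\<bar> < \<rho> \<Longrightarrow> (deriv ^^ n) g (of_real x) = of_real ((deriv ^^ n) f x)"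
proof (induction n arbitrary: x)
  case 0 thus ?case using eq by simp
next
  case (Suc n x)
  define h where "h = (deriv ^^ n) g"
  define F where "F = (deriv ^^ n) f"
  have IH: "\<And>y. \<bar>y\<bar> < \<rho> \<Longrightarrow> h (of_real y) = of_real (F y)" using Suc.IH by (simp add: h_def F_def)
  have holh: "h holomorphic_on ball 0 \<rho>" unfolding h_def by (intro holomorphic_higher_deriv hol) auto
  have xin: "of_real x \<in> ball (0::complex) \<rho>" using Suc.prems by simp
  define D where "D = deriv h (of_real x)"
  have hd: "(h has_field_derivative D) (at (of_real x))"
    unfolding D_def by (rule holomorphic_derivI[OF holh _ xin]) auto
  have hv: "((\<lambda>t. h (of_real t)) has_vector_derivative D) (at x)"
    by (rule has_vector_derivative_real_field[OF hd])
  have hRe: "((\<lambda>t. Re (h (of_real t))) has_real_derivative Re D) (at x)"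
  proof -
    have "((\<lambda>t. Re (h (of_real t))) has_derivative (\<lambda>u. Re (u *\<^sub>R D))) (at x)"
      using hv unfolding has_vector_derivative_def by (rule has_derivative_Re)
    moreover have "(\<lambda>u. Re (u *\<^sub>R D)) = (*) (Re D)" by (auto simp: fun_eq_iff)
    ultimately show ?thesis unfolding has_field_derivative_def by simp
  qed
  have hIm: "((\<lambda>t. Im (h (of_real t))) has_real_derivative Im D) (at x)"
  proof -
    have "((\<lambda>t. Im (h (of_real t))) has_derivative (\<lambda>u. Im (u *\<^sub>R D))) (at x)"
      using hv unfolding has_vector_derivative_def by (rule has_derivative_Im)
    moreover have "(\<lambda>u. Im (u *\<^sub>R D)) = (*) (Im D)" by (auto simp: fun_eq_iff)
    ultimately show ?thesis unfolding has_field_derivative_def by simp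
  qed
  have opn: "open {-\<rho><..<\<rho>}" by simp
  have xo: "x \<in> {-\<rho><..<\<rho>}" using Suc.prems by auto
  have FD: "(F has_real_derivative Re D) (at x)"
    by (rule has_field_derivative_transform_within_open[OF hRe opn xo]) (use IH in auto)
  have zD: "((\<lambda>t. 0) has_real_derivative Im D) (at x)"
    by (rule has_field_derivative_transform_within_open[OF hIm opn xo]) (use IH in auto)
  have "Im D = 0" using DERIV_unique[OF zD DERIV_const] .
  hence Dre: "D = of_real (Re D)" by (simp add: complex_eq_iff)
  have "(deriv ^^ Suc n) g (of_real x) = D" by (simp add: D_def h_def)
  also have "\<dots> = of_real (deriv F x)" using Dre DERIV_imp_deriv[OF FD] by simp
  also have "deriv F x = (deriv ^^ Suc n) f x" by (simp add: F_def)
  finally show ?case .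
qed

context thm2
begin

lemma main_ind: "i < d \<Longrightarrow> Gen i z \<Longrightarrow> iter_res d i FF z = residue (\<lambda>e. KK i e z) 0"
proof (induction i arbitrary: z)
  case 0
  define z1 where "z1 = z 1"
  define z2 where "z2 = z 2"
  have z1nz: "z1 \<noteq> 0" using "0.prems" d1 unfolding Gen_def z1_def by auto
  have rp0: "res_points d 0 z = {0}" by (simp add: res_points_def)
  have D0: "2 * z1 - z2 \<noteq> 0" if "2 \<le> d"
    using "0.prems" that unfolding Gen_def rp0 z1_def z2_def by (auto simp: numeral_2_eq_2)
  have it: "iter_res d 0 FF z = residue (\<lambda>w. FF (z(0 := w))) 0"
    by (simp add: res_step_def rp0)
  define R where "R = (if 2 \<le> d then min (norm z1) (norm (2 * z1 - z2)) else norm z1)"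
  have R: "R > 0" "R \<le> norm z1" "2 \<le> d \<Longrightarrow> R \<le> norm (2 * z1 - z2)"
    using z1nz D0 by (auto simp: R_def)
  have FFw: "FF (z(0 := w)) = 1 / w ^ N * w powi (int N - 2 - int j) * (z1 - w) ^ j * ek k w z1
     * (if 2 \<le> d then 1 / (of_nat k * z1 * (2 * z1 - w - z2)) else 1) * (of_nat d + w / (z1 - w)) ^ mm * Right 1 z" for w
  proof -
    have "Right 1 (z(0 := w)) = Right 1 z" by (rule Right_upd) (use d1 in auto)
    thus ?thesis unfolding FF_split by (simp add: DD_def z1_def z2_def numeral_2_eq_2)
  qed
  have hol: "(\<lambda>w. FF (z(0 := w))) holomorphic_on ball 0 R - {0}"
  proof -
    have nz1: "z1 - w \<noteq> 0" if "w \<in> ball 0 R" for w using that R by auto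
    have nz2: "of_nat k * z1 * (2 * z1 - w - z2) \<noteq> 0" if "w \<in> ball 0 R" "2 \<le> d" for w
    proof -
      have "norm w < norm (2 * z1 - z2)" using that R by auto
      hence "2 * z1 - w - z2 \<noteq> 0" by (auto simp: algebra_simps)
      thus ?thesis using z1nz N2 Nk by auto
    qed
    have ekh: "(\<lambda>w. ek k w z1) holomorphic_on A" for A unfolding ek_def by (intro holomorphic_intros)
    show ?thesis unfolding FFw
      by (cases "2 \<le> d") (simp_all, (intro holomorphic_intros ekh; use nz1 nz2 in auto)+)
  qed
  have "residue (\<lambda>w. FF (z(0 := w))) 0 = residue (\<lambda>e. FF (z(0 := z1 * e / (1 + e))) * (z1 / (1 + e)^2)) 0"
    by (rule residue_mobius[OF hol R(1) z1nz])
  also have "\<dots> = residue (\<lambda>e. KK 0 e z) 0"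
  proof (rule residue_cong)
    have ca: "continuous (at 0) (\<lambda>e. aa 0 e * z1 - z2)"
    proof -
      have "isCont (aa 0) 0"
        using continuous_on_interior[OF cont_aa[of 0]] by (simp add: interior_open)
      thus ?thesis by (intro continuous_intros)
    qed
    have a00: "aa 0 0 * z1 - z2 = 2 * z1 - z2" by (simp add: aa_def)
    obtain \<epsilon> where \<epsilon>: "\<epsilon> > 0" "\<forall>y. 2 \<le> d \<longrightarrow> dist 0 y < \<epsilon> \<longrightarrow> aa 0 y * z1 - z2 \<noteq> 0"
    proof (cases "2 \<le> d")
      case True
      from continuous_at_avoid[OF ca, of 0] D0[OF True] a00 obtain \<epsilon> where
        "\<epsilon> > 0" "\<forall>y. dist 0 y < \<epsilon> \<longrightarrow> aa 0 y * z1 - z2 \<noteq> 0" by auto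
      thus ?thesis using that by auto
    next
      case False thus ?thesis using that[of 1] by auto
    qed
    have pos: "min \<epsilon> (1/2) > 0" using \<epsilon> by simp
    have all: "\<forall>e. e \<noteq> 0 \<and> dist e 0 < min \<epsilon> (1/2) \<longrightarrow> FF (z(0 := z1 * e / (1 + e))) * (z1 / (1 + e)^2) = KK 0 e z"
    proof (intro allI impI)
      fix e :: complex assume e: "e \<noteq> 0 \<and> dist e 0 < min \<epsilon> (1/2)"
      show "FF (z(0 := z1 * e / (1 + e))) * (z1 / (1 + e)^2) = KK 0 e z"
        unfolding z1_def
      proof (rule level0_id)
        show "e \<noteq> 0" "norm e < 1/2" using e by auto
        show "z 1 \<noteq> 0" using z1nz by (simp add: z1_def)
        show "aa 0 e * z 1 - z 2 \<noteq> 0" if "2 \<le> d"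
          using \<epsilon>(2) e that by (auto simp: z1_def z2_def dist_commute)
      qed
    qed
    show "eventually (\<lambda>e. FF (z(0 := z1 * e / (1 + e))) * (z1 / (1 + e)^2) = KK 0 e z) (at 0)"
      unfolding eventually_at using pos all by blast
  qed simp
  finally show ?case using it by simp
next
  case (Suc i)
  have si: "Suc i < d" using Suc.prems by simp
  have IH: "\<And>z'. Gen i z' \<Longrightarrow> iter_res d i FF z' = residue (\<lambda>e. KK i e z') 0"
    using Suc.IH si by simp
  define pc where "pc = cc (Suc i) 0 * z (i+2)"
  define RP where "RP = res_points d (Suc i) z"
  have finRP: "finite RP" unfolding RP_def res_points_Suc[OF si] using coef_set_finite by simp
  have pcRP: "pc \<in> RP" unfolding pc_def RP_def by (rule pc_in[OF si])
  have "iter_res d (Suc i) FF z = (\<Sum>p\<in>RP. residue (\<lambda>w. iter_res d i FF (z(Suc i := w))) p)"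
    by (simp add: res_step_def RP_def)
  also have "\<dots> = (\<Sum>p\<in>RP. if p = pc then residue (\<lambda>e. KK (Suc i) e z) 0 else 0)"
    by (intro sum.cong refl) (use point_residue[OF si Suc.prems(2) _ IH] in \<open>auto simp: RP_def pc_def\<close>)
  also have "\<dots> = residue (\<lambda>e. KK (Suc i) e z) 0"
    using finRP pcRP by (simp add: sum.delta')
  finally show ?case .
qed

lemma final_value: "w_num N k d j = of_nat k * (deriv ^^ j) (Phi d) 0 / fact j"
proof -
  define Z where "Z = (\<lambda>_::nat. 0::complex)"
  define C where "C = of_nat k * (deriv ^^ j) (Phi d) 0 / fact j"
  have dS: "Suc (d - 1) = d" using d1 by simp
  have rp: "res_points d d Z = {0}" by (simp add: res_points_def)
  have "w_num N k d j = iter_res d (Suc (d-1)) FF Z" by (simp only: w_num_def FF_def Z_def dS)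
  also have "\<dots> = res_step d (Suc (d-1)) (iter_res d (d-1) FF) Z" by (simp only: iter_res.simps(2))
  also have "\<dots> = residue (\<lambda>w. iter_res d (d-1) FF (Z(d := w))) 0"
    unfolding res_step_def dS rp by simp
  also have "\<dots> = residue (\<lambda>w. C / w ^ Suc 0) 0"
  proof (rule residue_cong)
    have "iter_res d (d-1) FF (Z(d := w)) = C / w ^ Suc 0" if "w \<noteq> 0" for w
    proof -
      have G: "Gen (d-1) (Z(d := w))" unfolding Gen_def using that d1 by auto
      have "iter_res d (d-1) FF (Z(d := w)) = residue (\<lambda>e. KK (d-1) e (Z(d := w))) 0"
        by (rule main_ind[OF _ G]) (use d1 in auto)
      also have "\<dots> = residue (\<lambda>e. (of_nat k / w * Phi d e) / e ^ Suc j) 0"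
      proof -
        have "KK (d-1) e (Z(d := w)) = (of_nat k / w * Phi d e) / e ^ Suc j" for e
          unfolding KK_def using d1 by (simp add: field_simps)
        thus ?thesis by simp
      qed
      also have "\<dots> = (deriv ^^ j) (\<lambda>e. of_nat k / w * Phi d e) 0 / fact j"
        by (rule residue_holomorphic_over_power'[of "ball 0 (1/2)"]) (auto intro!: holomorphic_intros hol_Phi)
      also have "(deriv ^^ j) (\<lambda>e. of_nat k / w * Phi d e) 0 = of_nat k / w * (deriv ^^ j) (Phi d) 0"
        by (rule higher_deriv_cmult[of _ "ball 0 (1/2)"]) (auto intro: hol_Phi)
      finally have X: "iter_res d (d-1) FF (Z(d := w)) = of_nat k / w * (deriv ^^ j) (Phi d) 0 / fact j" .
      have eqC: "of_nat k / w * (deriv ^^ j) (Phi d) 0 / fact j = C / w ^ Suc 0" by (simp add: C_def field_simps)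
      show ?thesis using X eqC by (rule trans)
    qed
    thus "eventually (\<lambda>w. iter_res d (d-1) FF (Z(d := w)) = C / w ^ Suc 0) (at 0)"
      by (auto simp: eventually_at_filter)
  qed simp
  also have "\<dots> = (deriv ^^ 0) (\<lambda>_. C) 0 / fact 0"
    by (rule residue_holomorphic_over_power'[of UNIV]) auto
  finally show ?thesis by (simp add: C_def)
qed

lemma Phi_real: "Phi d (of_real x) = of_real ((\<Prod>r=1..k*d. real r + real k * x) / (\<Prod>r=1..d. (real r + x) ^ N))"
  unfolding Phi_def by (simp add: of_real_prod)

end

theorem theorem2:
  fixes N k d j :: nat
  assumes "2 \<le> N" and "N \<le> k" and "1 \<le> d"
  shows "w_num N k d j / of_nat k =
    complex_of_real ((deriv ^^ j)
       (\<lambda>\<epsilon>::real. (\<Prod>r=1..k*d. real r + real k * \<epsilon>) / (\<Prod>r=1..d. (real r + \<epsilon>) ^ N)) 0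
     / fact j)"
proof -
  interpret thm2 N k d j using assms by unfold_locales
  define f where "f = (\<lambda>\<epsilon>::real. (\<Prod>r=1..k*d. real r + real k * \<epsilon>) / (\<Prod>r=1..d. (real r + \<epsilon>) ^ N))"
  have k0: "(of_nat k :: complex) \<noteq> 0" using assms by auto
  have "(deriv ^^ j) (Phi d) (of_real 0) = of_real ((deriv ^^ j) f 0)"
    by (rule higher_deriv_real_complex[of _ "1/2"]) (auto intro: hol_Phi simp: Phi_real f_def)
  hence "(deriv ^^ j) (Phi d) 0 = of_real ((deriv ^^ j) f 0)" by simp
  thus ?thesis unfolding final_value f_def[symmetric] using k0 by simp
qed


end
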